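(* Let $E$ and $F$ be Banach lattices such that the norm of $E'$ is order continuous and $F$ is reflexive. Then each weak Dunford–Pettis operator from $E$ into $F$ is uaw-Dunford–Pettis.
   Context: All operators are continuous linear operators. A net $(x_\alpha)$ in a Banach lattice $E$ is uaw-convergent to $x$ (written $x_\alpha\xrightarrow{uaw}x$) if $|x_\alpha-x|\wedge u\to 0$ weakly for every $u\in E_+$. An operator $T$ from a Banach lattice $E$ into a Banach space $X$ is uaw-Dunford–Pettis if for every norm bounded sequence $(x_n)$ in $E$ with $x_n\xrightarrow{uaw}0$ one has $\|Tx_n\|\to 0$. An operator $T:X\to Y$ between Banach spaces is weak Dunford–Pettis if $f_n(Tx_n)\to 0$ for every weakly null sequence $(x_n)$ in $X$ and every weakly null sequence $(f_n)$ in $Y'$. *)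

theory Defs
  imports "HOL-Analysis.Analysis"
begin

class banach_lattice = banach + ordered_real_vector + lattice +
  assumes lattice_norm_mono:
    "sup x (- x) \<le> sup y (- y) \<Longrightarrow> norm x \<le> norm y"

definition lmod :: "'a::banach_lattice \<Rightarrow> 'a" where
  "lmod x = sup x (- x)"

text \<open>The (norm) dual E' of E is the space of continuous linear functionals,
  \<open>'a \<Rightarrow>\<^sub>L real\<close>, with the operator norm. Its order is the dual order.\<close>

definition dual_le :: "('a::banach_lattice \<Rightarrow>\<^sub>L real) \<Rightarrow> ('a \<Rightarrow>\<^sub>L real) \<Rightarrow> bool" where
  "dual_le f g \<longleftrightarrow> (\<forall>x. 0 \<le> x \<longrightarrow> blinfun_apply f x \<le> blinfun_apply g x)"

definition dual_norm_order_continuous :: "'a::banach_lattice itself \<Rightarrow> bool" where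
  "dual_norm_order_continuous (_ :: 'a itself) \<longleftrightarrow>
    (\<forall>D :: ('a \<Rightarrow>\<^sub>L real) set.
       D \<noteq> {} \<and>
       (\<forall>f\<in>D. \<forall>g\<in>D. \<exists>h\<in>D. dual_le h f \<and> dual_le h g) \<and>
       (\<forall>f\<in>D. dual_le 0 f) \<and>
       (\<forall>g. (\<forall>f\<in>D. dual_le g f) \<longrightarrow> dual_le g 0)
       \<longrightarrow> (\<forall>e>0. \<exists>f\<in>D. norm f < e))"

definition reflexive_space :: "'b::real_normed_vector itself \<Rightarrow> bool" where
  "reflexive_space (_ :: 'b itself) \<longleftrightarrow>
    (\<forall>\<phi> :: ('b \<Rightarrow>\<^sub>L real) \<Rightarrow>\<^sub>L real. \<exists>y::'b.
        \<forall>f. blinfun_apply \<phi> f = blinfun_apply f y)"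

definition weakly_null :: "(nat \<Rightarrow> 'a::real_normed_vector) \<Rightarrow> bool" where
  "weakly_null x \<longleftrightarrow> (\<forall>f :: 'a \<Rightarrow>\<^sub>L real. (\<lambda>n. blinfun_apply f (x n)) \<longlonglongrightarrow> 0)"

definition uaw_null :: "(nat \<Rightarrow> 'a::banach_lattice) \<Rightarrow> bool" where
  "uaw_null x \<longleftrightarrow> (\<forall>u. 0 \<le> u \<longrightarrow> weakly_null (\<lambda>n. inf (lmod (x n)) u))"

definition weak_Dunford_Pettis :: "('a::real_normed_vector \<Rightarrow>\<^sub>L 'b::real_normed_vector) \<Rightarrow> bool" where
  "weak_Dunford_Pettis T \<longleftrightarrow>
    (\<forall>(x :: nat \<Rightarrow> 'a) (f :: nat \<Rightarrow> ('b \<Rightarrow>\<^sub>L real)).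
       weakly_null x \<and> weakly_null f \<longrightarrow>
       (\<lambda>n. blinfun_apply (f n) (blinfun_apply T (x n))) \<longlonglongrightarrow> 0)"

definition uaw_Dunford_Pettis :: "('a::banach_lattice \<Rightarrow>\<^sub>L 'b::real_normed_vector) \<Rightarrow> bool" where
  "uaw_Dunford_Pettis T \<longleftrightarrow>
    (\<forall>x :: nat \<Rightarrow> 'a. bounded (range x) \<and> uaw_null x \<longrightarrow>
       (\<lambda>n. norm (blinfun_apply T (x n))) \<longlonglongrightarrow> 0)"

end

theory Submission
  imports Defs "HOL-Library.Lattice_Algebras" "HOL-Library.Diagonal_Subsequence"
begin

definition hb_good :: "('a::real_vector \<Rightarrow> real) \<Rightarrow> 'a set \<Rightarrow> ('a \<Rightarrow> real) \<Rightarrow> ('a \<times> real) set \<Rightarrow> bool" where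
  "hb_good p M \<phi> G \<longleftrightarrow>
     (\<forall>x y y'. (x,y)\<in>G \<longrightarrow> (x,y')\<in>G \<longrightarrow> y = y') \<and>
     (\<forall>x y x' y'. (x,y)\<in>G \<longrightarrow> (x',y')\<in>G \<longrightarrow> (x+x', y+y') \<in> G) \<and>
     (\<forall>c x y. (x,y)\<in>G \<longrightarrow> (c *\<^sub>R x, c*y) \<in> G) \<and>
     (\<forall>x\<in>M. (x, \<phi> x) \<in> G) \<and> (0,0) \<in> G \<and>
     (\<forall>x y. (x,y)\<in>G \<longrightarrow> y \<le> p x)"

lemma hb_extend:
  fixes p :: "'a::real_vector \<Rightarrow> real"
  assumes subadd: "\<And>x y. p (x + y) \<le> p x + p y"
    and homog: "\<And>c x. 0 \<le> c \<Longrightarrow> p (c *\<^sub>R x) = c * p x"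
    and G: "hb_good p M \<phi> G" and x0: "x0 \<notin> fst ` G"
  shows "\<exists>G'. hb_good p M \<phi> G' \<and> G \<subseteq> G' \<and> G' \<noteq> G"
proof -
  have fnc: "\<And>x y y'. (x,y)\<in>G \<Longrightarrow> (x,y')\<in>G \<Longrightarrow> y = y'"
    and add: "\<And>x y x' y'. (x,y)\<in>G \<Longrightarrow> (x',y')\<in>G \<Longrightarrow> (x+x', y+y') \<in> G"
    and scal: "\<And>c x y. (x,y)\<in>G \<Longrightarrow> (c *\<^sub>R x, c*y) \<in> G"
    and Mx: "\<And>x. x\<in>M \<Longrightarrow> (x, \<phi> x) \<in> G"
    and G0: "(0,0) \<in> G"
    and dom: "\<And>x y. (x,y)\<in>G \<Longrightarrow> y \<le> p x"
    using G unfolding hb_good_def by blast+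
  have key: "y - p (u - x0) \<le> p (v + x0) - z" if "(u,y)\<in>G" "(v,z)\<in>G" for u y v z
  proof -
    have "y + z \<le> p (u + v)" using dom[OF add[OF that]] .
    also have "u + v = (u - x0) + (v + x0)" by simp
    also have "p \<dots> \<le> p (u - x0) + p (v + x0)" by (rule subadd)
    finally show ?thesis by simp
  qed
  define A where "A = {y - p (u - x0) | u y. (u,y) \<in> G}"
  define c where "c = Sup A"
  have Ane: "A \<noteq> {}" using G0 unfolding A_def by blast
  have Abdd: "bdd_above A" unfolding A_def bdd_above_def
    using key[OF _ G0] by auto
  have c_ge: "y - p (u - x0) \<le> c" if "(u,y) \<in> G" for u y
    unfolding c_def by (rule cSup_upper[OF _ Abdd]) (use that A_def in blast)
  have c_le: "c \<le> p (v + x0) - z" if "(v,z) \<in> G" for v z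
    unfolding c_def by (rule cSup_least[OF Ane]) (use key[OF _ that] A_def in blast)
  define G' where "G' = {(u + t *\<^sub>R x0, y + t * c) | u y t. (u,y) \<in> G}"
  have memG': "\<exists>u z t. (u,z)\<in>G \<and> x = u + t *\<^sub>R x0 \<and> y = z + t * c" if "(x,y) \<in> G'" for x y
    using that unfolding G'_def by blast
  have memI: "(u + t *\<^sub>R x0, z + t * c) \<in> G'" if "(u,z)\<in>G" for u z t
    using that unfolding G'_def by blast
  have uniq: "t = t' \<and> u = u'" if "(u,y) \<in> G" "(u',y') \<in> G" "u + t *\<^sub>R x0 = u' + t' *\<^sub>R x0" for u y u' y' t t'
  proof (cases "t = t'")
    case True then show ?thesis using that by simp
  next
    case False
    have "(u' - u) = (t - t') *\<^sub>R x0" using that(3) by (simp add: algebra_simps)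
    hence "x0 = (1/(t - t')) *\<^sub>R (u' + (-1) *\<^sub>R u)" using False by simp
    moreover have "(u' + (-1) *\<^sub>R u, y' + (-1) * y) \<in> G" using add[OF that(2) scal[OF that(1)]] .
    ultimately have "(x0, (1/(t - t')) * (y' + (-1) * y)) \<in> G" using scal by metis
    hence "x0 \<in> fst ` G" by force
    with x0 show ?thesis by simp
  qed
  have good': "hb_good p M \<phi> G'"
    unfolding hb_good_def
  proof (intro conjI allI impI ballI)
    fix x y y' assume "(x,y)\<in>G'" "(x,y')\<in>G'"
    then obtain u1 z1 t1 u2 z2 t2 where "(u1,z1)\<in>G" "(u2,z2)\<in>G" "x = u1 + t1 *\<^sub>R x0" "y = z1 + t1 * c"
      "x = u2 + t2 *\<^sub>R x0" "y' = z2 + t2 * c" using memG' by metis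
    then show "y = y'" using uniq[of u1 z1 u2 z2 t1 t2] fnc by auto
  next
    fix x y x' y' assume "(x,y)\<in>G'" "(x',y')\<in>G'"
    then obtain u1 z1 t1 u2 z2 t2 where "(u1,z1)\<in>G" "(u2,z2)\<in>G" "x = u1 + t1 *\<^sub>R x0" "y = z1 + t1 * c"
      "x' = u2 + t2 *\<^sub>R x0" "y' = z2 + t2 * c" using memG' by metis
    moreover have "(u1+u2, z1+z2) \<in> G" using add calculation by blast
    ultimately show "(x + x', y + y') \<in> G'"
      using memI[of "u1+u2" "z1+z2" "t1+t2"] by (simp add: algebra_simps)
  next
    fix a x y assume "(x,y)\<in>G'"
    then obtain u1 z1 t1 where "(u1,z1)\<in>G" "x = u1 + t1 *\<^sub>R x0" "y = z1 + t1 * c"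
      using memG' by metis
    moreover have "(a *\<^sub>R u1, a*z1) \<in> G" using scal calculation by blast
    ultimately show "(a *\<^sub>R x, a * y) \<in> G'"
      using memI[of "a *\<^sub>R u1" "a*z1" "a*t1"] by (simp add: algebra_simps)
  next
    fix x assume "x \<in> M"
    then show "(x, \<phi> x) \<in> G'" using memI[OF Mx, of x 0] by simp
  next
    show "(0,0) \<in> G'" using memI[OF G0, of 0] by simp
  next
    fix x y assume "(x,y)\<in>G'"
    then obtain u z t where uz: "(u,z)\<in>G" and xy: "x = u + t *\<^sub>R x0" "y = z + t * c"
      using memG' by metis
    consider "t = 0" | "t > 0" | "t < 0" by linarith
    then show "y \<le> p x"
    proof cases
      case 1 then show ?thesis using xy dom[OF uz] by simp
    next
      case 2
      have s: "((1/t) *\<^sub>R u, (1/t) * z) \<in> G" using scal[OF uz] .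
      have "c \<le> p ((1/t) *\<^sub>R u + x0) - (1/t) * z" using c_le[OF s] .
      hence "t * c \<le> t * (p ((1/t) *\<^sub>R u + x0) - (1/t) * z)" using 2 by (simp add: mult_left_mono)
      moreover have e: "t *\<^sub>R ((1/t) *\<^sub>R u + x0) = x" using 2 xy by (simp add: algebra_simps)
      moreover have "p x = t * p ((1/t) *\<^sub>R u + x0)" using homog[of t "(1/t) *\<^sub>R u + x0"] 2 e by simp
      ultimately show ?thesis using xy 2 by (simp add: algebra_simps)
    next
      case 3
      define s where "s = - t"
      have s0: "s > 0" using 3 s_def by simp
      have sG: "((1/s) *\<^sub>R u, (1/s) * z) \<in> G" using scal[OF uz] .
      have "(1/s) * z - p ((1/s) *\<^sub>R u - x0) \<le> c" using c_ge[OF sG] .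
      hence "s * ((1/s) * z - p ((1/s) *\<^sub>R u - x0)) \<le> s * c" using s0 by (simp add: mult_left_mono)
      moreover have e: "s *\<^sub>R ((1/s) *\<^sub>R u - x0) = x" using s0 xy s_def by (simp add: algebra_simps)
      moreover have "p x = s * p ((1/s) *\<^sub>R u - x0)" using homog[of s "(1/s) *\<^sub>R u - x0"] s0 e by simp
      ultimately show ?thesis using xy s_def s0 by (simp add: algebra_simps)
    qed
  qed
  have sub: "G \<subseteq> G'"
  proof
    fix g assume "g \<in> G" then obtain u z where "g = (u,z)" "(u,z) \<in> G" by (cases g) auto
    then show "g \<in> G'" using memI[of u z 0] by simp
  qed
  have "(x0, c) \<in> G'" using memI[OF G0, of 1] by simp
  moreover have "(x0, c) \<notin> G" using x0 by force
  ultimately show ?thesis using good' sub by blast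
qed

lemma hahn_banach:
  fixes p :: "'a::real_vector \<Rightarrow> real"
  assumes subadd: "\<And>x y. p (x + y) \<le> p x + p y"
    and homog: "\<And>c x. 0 \<le> c \<Longrightarrow> p (c *\<^sub>R x) = c * p x"
    and M: "subspace M"
    and \<phi>add: "\<And>x y. x \<in> M \<Longrightarrow> y \<in> M \<Longrightarrow> \<phi> (x + y) = \<phi> x + \<phi> y"
    and \<phi>scal: "\<And>c x. x \<in> M \<Longrightarrow> \<phi> (c *\<^sub>R x) = c * \<phi> x"
    and \<phi>p: "\<And>x. x \<in> M \<Longrightarrow> \<phi> x \<le> p x"
  shows "\<exists>f. linear f \<and> (\<forall>x\<in>M. f x = \<phi> x) \<and> (\<forall>x. f x \<le> p x)"
proof -
  define \<A> where "\<A> = {G. hb_good p M \<phi> G}"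
  define G0 where "G0 = {(x, \<phi> x) | x. x \<in> M}"
  have M0: "0 \<in> M" using M by (simp add: subspace_0)
  have \<phi>0: "\<phi> 0 = 0" using \<phi>scal[OF M0, of 0] by simp
  have "G0 \<in> \<A>" unfolding \<A>_def hb_good_def G0_def
    using M0 \<phi>0 \<phi>p \<phi>add \<phi>scal subspace_add[OF M] subspace_scale[OF M] by auto
  hence ne: "\<A> \<noteq> {}" by blast
  have ch: "\<Union>\<C> \<in> \<A>" if ne1: "\<C> \<noteq> {}" and chn: "subset.chain \<A> \<C>" for \<C>
  proof -
    have sub: "\<C> \<subseteq> \<A>" and tot: "\<And>X Y. X \<in> \<C> \<Longrightarrow> Y \<in> \<C> \<Longrightarrow> X \<subseteq> Y \<or> Y \<subseteq> X"
      using chn unfolding subset_chain_def by blast+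
    have gd: "\<And>X. X \<in> \<C> \<Longrightarrow> hb_good p M \<phi> X" using sub unfolding \<A>_def by blast
    obtain X0 where X0: "X0 \<in> \<C>" using ne1 by blast
    have two: "\<exists>X\<in>\<C>. a \<in> X \<and> b \<in> X" if ab: "a \<in> \<Union>\<C>" "b \<in> \<Union>\<C>" for a b
    proof -
      obtain X Y where "X\<in>\<C>" "Y\<in>\<C>" "a\<in>X" "b\<in>Y" using ab by blast
      then show ?thesis using tot[of X Y] by blast
    qed
    show ?thesis unfolding \<A>_def mem_Collect_eq hb_good_def
    proof (intro conjI allI impI ballI)
      fix x y y' assume "(x, y) \<in> \<Union>\<C>" "(x, y') \<in> \<Union>\<C>"
      then obtain X where "X\<in>\<C>" "(x,y)\<in>X" "(x,y')\<in>X" using two by blast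
      then show "y = y'" using gd unfolding hb_good_def by blast
    next
      fix x y x' y' assume "(x, y) \<in> \<Union>\<C>" "(x', y') \<in> \<Union>\<C>"
      then obtain X where "X\<in>\<C>" "(x,y)\<in>X" "(x',y')\<in>X" using two by blast
      then show "(x + x', y + y') \<in> \<Union>\<C>" using gd unfolding hb_good_def by blast
    next
      fix c x y assume "(x, y) \<in> \<Union>\<C>"
      then obtain X where "X\<in>\<C>" "(x,y)\<in>X" by blast
      then show "(c *\<^sub>R x, c * y) \<in> \<Union>\<C>" using gd unfolding hb_good_def by blast
    next
      fix x assume "x \<in> M"
      then show "(x, \<phi> x) \<in> \<Union>\<C>" using gd[OF X0] X0 unfolding hb_good_def by blast
    next
      show "(0, 0) \<in> \<Union>\<C>" using gd[OF X0] X0 unfolding hb_good_def by blast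
    next
      fix x y assume "(x, y) \<in> \<Union>\<C>"
      then obtain X where "X\<in>\<C>" "(x,y)\<in>X" by blast
      then show "y \<le> p x" using gd unfolding hb_good_def by blast
    qed
  qed
  obtain Gm where Gm: "Gm \<in> \<A>" and max: "\<And>X. X \<in> \<A> \<Longrightarrow> Gm \<subseteq> X \<Longrightarrow> X = Gm"
    using subset_Zorn_nonempty[OF ne ch] by blast
  have gm: "hb_good p M \<phi> Gm" using Gm unfolding \<A>_def by blast
  have tot: "\<exists>y. (x, y) \<in> Gm" for x
  proof (rule ccontr)
    assume "\<nexists>y. (x, y) \<in> Gm"
    hence "x \<notin> fst ` Gm" by force
    from hb_extend[OF subadd homog gm this] obtain G' where "hb_good p M \<phi> G'" "Gm \<subseteq> G'" "G' \<noteq> Gm"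
      by blast
    then show False using max[of G'] unfolding \<A>_def by blast
  qed
  have fnc: "\<And>x y y'. (x,y)\<in>Gm \<Longrightarrow> (x,y')\<in>Gm \<Longrightarrow> y = y'"
    and add: "\<And>x y x' y'. (x,y)\<in>Gm \<Longrightarrow> (x',y')\<in>Gm \<Longrightarrow> (x+x', y+y') \<in> Gm"
    and scal: "\<And>c x y. (x,y)\<in>Gm \<Longrightarrow> (c *\<^sub>R x, c*y) \<in> Gm"
    and Mx: "\<And>x. x\<in>M \<Longrightarrow> (x, \<phi> x) \<in> Gm"
    and dom: "\<And>x y. (x,y)\<in>Gm \<Longrightarrow> y \<le> p x"
    using gm unfolding hb_good_def by blast+
  define f where "f x = (THE y. (x, y) \<in> Gm)" for x
  have fG: "(x, f x) \<in> Gm" for x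
    unfolding f_def using tot[of x] fnc by (metis theI)
  have fE: "f x = y" if "(x,y) \<in> Gm" for x y using fG[of x] that fnc by blast
  have "linear f"
  proof (rule linearI)
    fix x y show "f (x + y) = f x + f y" using fE[OF add[OF fG fG]] .
  next
    fix c x show "f (c *\<^sub>R x) = c *\<^sub>R f x" using fE[OF scal[OF fG]] by simp
  qed
  moreover have "\<forall>x\<in>M. f x = \<phi> x" using fE[OF Mx] by blast
  moreover have "\<forall>x. f x \<le> p x" using dom[OF fG] by blast
  ultimately show ?thesis by blast
qed

lemma hb_normed:
  fixes \<phi> :: "'a::real_normed_vector \<Rightarrow> real"
  assumes M: "subspace M"
    and \<phi>add: "\<And>x y. x \<in> M \<Longrightarrow> y \<in> M \<Longrightarrow> \<phi> (x + y) = \<phi> x + \<phi> y"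
    and \<phi>scal: "\<And>c x. x \<in> M \<Longrightarrow> \<phi> (c *\<^sub>R x) = c * \<phi> x"
    and C: "0 \<le> C" and bnd: "\<And>x. x \<in> M \<Longrightarrow> \<bar>\<phi> x\<bar> \<le> C * norm x"
  shows "\<exists>f::'a \<Rightarrow>\<^sub>L real. (\<forall>x\<in>M. blinfun_apply f x = \<phi> x) \<and> (\<forall>x. \<bar>blinfun_apply f x\<bar> \<le> C * norm x)"
proof -
  have "\<exists>f. linear f \<and> (\<forall>x\<in>M. f x = \<phi> x) \<and> (\<forall>x. f x \<le> C * norm x)"
  proof (rule hahn_banach[OF _ _ M \<phi>add \<phi>scal])
    show "C * norm (x + y) \<le> C * norm x + C * norm y" for x y
      using C norm_triangle_ineq[of x y] by (simp add: mult_left_mono distrib_left[symmetric])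
    show "C * norm (c *\<^sub>R x) = c * (C * norm x)" if "0 \<le> c" for c x using that by simp
    show "\<phi> x \<le> C * norm x" if "x \<in> M" for x using bnd[OF that] by simp
  qed auto
  then obtain f where lf: "linear f" and fM: "\<forall>x\<in>M. f x = \<phi> x" and fp: "\<forall>x. f x \<le> C * norm x" by blast
  have ab: "\<bar>f x\<bar> \<le> C * norm x" for x
  proof -
    have "- f x = f (- x)" using linear_neg[OF lf] by simp
    also have "\<dots> \<le> C * norm x" using fp[rule_format, of "-x"] by simp
    finally show ?thesis using fp by (simp add: abs_le_iff)
  qed
  have bl: "bounded_linear f"
    using lf ab by (intro bounded_linear_intro[of f C]) (auto simp: linear_add linear_scale mult.commute)
  show ?thesis
    by (rule exI[of _ "Blinfun f"]) (use fM ab bounded_linear_Blinfun_apply[OF bl] in auto)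
qed

lemma hb_separate:
  fixes V :: "'a::real_normed_vector set"
  assumes V: "subspace V" and cV: "closed V" and w: "w \<notin> V"
  shows "\<exists>f::'a \<Rightarrow>\<^sub>L real. (\<forall>v\<in>V. blinfun_apply f v = 0) \<and> blinfun_apply f w = infdist w V
            \<and> (\<forall>x. \<bar>blinfun_apply f x\<bar> \<le> norm x)"
proof -
  define d where "d = infdist w V"
  have V0: "0 \<in> V" using V by (simp add: subspace_0)
  have d0: "d > 0"
  proof -
    have "V \<noteq> {}" using V0 by blast
    hence "d \<noteq> 0" using in_closed_iff_infdist_zero[OF cV, of w] w d_def by simp
    moreover have "d \<ge> 0" unfolding d_def by (rule infdist_nonneg)
    ultimately show ?thesis by simp
  qed
  define S where "S = {v + t *\<^sub>R w | v t. v \<in> V}"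
  have uniq: "t = t'" if "v \<in> V" "v' \<in> V" "v + t *\<^sub>R w = v' + t' *\<^sub>R w" for v v' t t'
  proof (rule ccontr)
    assume ne: "t \<noteq> t'"
    have "(t - t') *\<^sub>R w = v' - v" using that(3) by (simp add: algebra_simps)
    moreover have "w = (1/(t-t')) *\<^sub>R ((t - t') *\<^sub>R w)" using ne by simp
    ultimately have "w = (1/(t-t')) *\<^sub>R (v' - v)" by simp
    moreover have "(1/(t-t')) *\<^sub>R (v' - v) \<in> V" using V that(1,2) by (simp add: subspace_scale subspace_diff)
    ultimately show False using w by simp
  qed
  define \<phi> where "\<phi> s = (SOME t. \<exists>v\<in>V. s = v + t *\<^sub>R w) * d" for s
  have \<phi>E: "\<phi> (v + t *\<^sub>R w) = t * d" if "v \<in> V" for v t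
  proof -
    have "\<exists>t'. \<exists>v'\<in>V. v + t *\<^sub>R w = v' + t' *\<^sub>R w" using that by blast
    hence "\<exists>v'\<in>V. v + t *\<^sub>R w = v' + (SOME t'. \<exists>v'\<in>V. v + t *\<^sub>R w = v' + t' *\<^sub>R w) *\<^sub>R w"
      by (rule someI_ex)
    then obtain v' where "v' \<in> V" "v + t *\<^sub>R w = v' + (SOME t'. \<exists>v'\<in>V. v + t *\<^sub>R w = v' + t' *\<^sub>R w) *\<^sub>R w"
      by blast
    hence "(SOME t'. \<exists>v'\<in>V. v + t *\<^sub>R w = v' + t' *\<^sub>R w) = t" using uniq that by metis
    then show ?thesis unfolding \<phi>_def by simp
  qed
  have Ssub: "subspace S"
    unfolding subspace_def S_def
  proof (intro conjI ballI allI)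
    show "0 \<in> {v + t *\<^sub>R w |v t. v \<in> V}" using V0 by (auto intro!: exI[of _ 0])
  next
    fix x y assume "x \<in> {v + t *\<^sub>R w |v t. v \<in> V}" "y \<in> {v + t *\<^sub>R w |v t. v \<in> V}"
    then obtain v1 t1 v2 t2 where "v1 \<in> V" "v2 \<in> V" "x = v1 + t1 *\<^sub>R w" "y = v2 + t2 *\<^sub>R w" by blast
    then show "x + y \<in> {v + t *\<^sub>R w |v t. v \<in> V}"
      using subspace_add[OF V] by (auto intro!: exI[of _ "v1+v2"] exI[of _ "t1+t2"] simp: algebra_simps)
  next
    fix c x assume "x \<in> {v + t *\<^sub>R w |v t. v \<in> V}"
    then obtain v1 t1 where "v1 \<in> V" "x = v1 + t1 *\<^sub>R w" by blast
    then show "c *\<^sub>R x \<in> {v + t *\<^sub>R w |v t. v \<in> V}"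
      using subspace_scale[OF V] by (auto intro!: exI[of _ "c *\<^sub>R v1"] exI[of _ "c*t1"] simp: algebra_simps)
  qed
  have memS: "\<exists>v t. v \<in> V \<and> x = v + t *\<^sub>R w" if "x \<in> S" for x using that unfolding S_def by blast
  have "\<exists>f::'a \<Rightarrow>\<^sub>L real. (\<forall>x\<in>S. blinfun_apply f x = \<phi> x) \<and> (\<forall>x. \<bar>blinfun_apply f x\<bar> \<le> 1 * norm x)"
  proof (rule hb_normed[OF Ssub])
    fix x y assume "x \<in> S" "y \<in> S"
    then obtain v1 t1 v2 t2 where "v1 \<in> V" "v2 \<in> V" "x = v1 + t1 *\<^sub>R w" "y = v2 + t2 *\<^sub>R w"
      using memS by blast
    note vv = this
    have e: "x + y = (v1 + v2) + (t1 + t2) *\<^sub>R w" using vv by (simp add: algebra_simps)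
    have "\<phi> (x + y) = (t1 + t2) * d" unfolding e by (rule \<phi>E) (use subspace_add[OF V] vv in blast)
    moreover have "\<phi> x = t1 * d" unfolding vv(3) by (rule \<phi>E) (use vv in blast)
    moreover have "\<phi> y = t2 * d" unfolding vv(4) by (rule \<phi>E) (use vv in blast)
    ultimately show "\<phi> (x + y) = \<phi> x + \<phi> y" by (simp add: algebra_simps)
  next
    fix c x assume "x \<in> S"
    then obtain v1 t1 where "v1 \<in> V" "x = v1 + t1 *\<^sub>R w" using memS by blast
    note vv = this
    have e: "c *\<^sub>R x = (c *\<^sub>R v1) + (c * t1) *\<^sub>R w" using vv by (simp add: algebra_simps)
    have "\<phi> (c *\<^sub>R x) = (c * t1) * d" unfolding e by (rule \<phi>E) (use subspace_scale[OF V] vv in blast)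
    moreover have "\<phi> x = t1 * d" unfolding vv(2) by (rule \<phi>E) (use vv in blast)
    ultimately show "\<phi> (c *\<^sub>R x) = c * \<phi> x" by simp
  next
    fix x assume "x \<in> S"
    then obtain v t where vt: "v \<in> V" "x = v + t *\<^sub>R w" using memS by blast
    show "\<bar>\<phi> x\<bar> \<le> 1 * norm x"
    proof (cases "t = 0")
      case True then show ?thesis using vt \<phi>E[OF vt(1), of 0] by simp
    next
      case False
      have "- ((1/t) *\<^sub>R v) \<in> V" using V vt by (simp add: subspace_scale subspace_neg)
      hence "d \<le> dist w (- ((1/t) *\<^sub>R v))" unfolding d_def by (rule infdist_le)
      also have "dist w (- ((1/t) *\<^sub>R v)) = norm ((1/t) *\<^sub>R x)"
        using vt False by (simp add: dist_norm algebra_simps)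
      also have "\<dots> = norm x / \<bar>t\<bar>" by simp
      finally have "d * \<bar>t\<bar> \<le> norm x" using False by (simp add: field_simps)
      then show ?thesis using vt \<phi>E d0 by (simp add: abs_mult mult.commute)
    qed
  qed simp
  then obtain f :: "'a \<Rightarrow>\<^sub>L real" where f1: "\<forall>x\<in>S. blinfun_apply f x = \<phi> x" and f2: "\<forall>x. \<bar>blinfun_apply f x\<bar> \<le> 1 * norm x"
    by blast
  have "\<forall>v\<in>V. blinfun_apply f v = 0"
  proof
    fix v assume "v \<in> V"
    hence "v + 0 *\<^sub>R w \<in> S" unfolding S_def by blast
    then show "blinfun_apply f v = 0" using f1 \<phi>E[OF \<open>v \<in> V\<close>, of 0] by simp
  qed
  moreover have "blinfun_apply f w = d"
  proof -
    have "0 + 1 *\<^sub>R w \<in> S" unfolding S_def using V0 by blast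
    then show ?thesis using f1 \<phi>E[OF V0, of 1] by simp
  qed
  ultimately show ?thesis using f2 d_def by auto
qed

lemma hb_norming:
  fixes y :: "'a::real_normed_vector"
  shows "\<exists>f::'a \<Rightarrow>\<^sub>L real. blinfun_apply f y = norm y \<and> (\<forall>x. \<bar>blinfun_apply f x\<bar> \<le> norm x)"
proof (cases "y = 0")
  case True then show ?thesis by (intro exI[of _ 0]) auto
next
  case False
  from hb_separate[of "{0}" y] False show ?thesis by (auto simp: dist_norm)
qed

definition lcq :: "(nat \<Rightarrow> 'x::real_vector) \<Rightarrow> rat list \<Rightarrow> 'x" where
  "lcq a l = (\<Sum>i<length l. real_of_rat (l!i) *\<^sub>R a i)"

lemma lcq_pad:
  assumes "length l \<le> N"
  shows "lcq a l = (\<Sum>i<N. real_of_rat (nth_default 0 l i) *\<^sub>R a i)"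
proof -
  have "(\<Sum>i<N. real_of_rat (nth_default 0 l i) *\<^sub>R a i) = (\<Sum>i<length l. real_of_rat (nth_default 0 l i) *\<^sub>R a i)"
    by (rule sum.mono_neutral_right) (use assms in \<open>auto simp: nth_default_def\<close>)
  also have "\<dots> = lcq a l" unfolding lcq_def by (rule sum.cong) (auto simp: nth_default_def)
  finally show ?thesis by simp
qed

lemma lcq_add: "\<exists>l. lcq a l1 + lcq a l2 = lcq a l"
proof -
  define N where "N = max (length l1) (length l2)"
  define l where "l = map (\<lambda>i. nth_default 0 l1 i + nth_default 0 l2 i) [0..<N]"
  have "lcq a l1 + lcq a l2 = (\<Sum>i<N. real_of_rat (nth_default 0 l1 i) *\<^sub>R a i) + (\<Sum>i<N. real_of_rat (nth_default 0 l2 i) *\<^sub>R a i)"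
    using lcq_pad[of l1 N a] lcq_pad[of l2 N a] N_def by simp
  also have "\<dots> = (\<Sum>i<N. real_of_rat (nth_default 0 l i) *\<^sub>R a i)"
    unfolding sum.distrib[symmetric]
    by (rule sum.cong) (auto simp: l_def nth_default_def of_rat_add scaleR_add_left)
  also have "\<dots> = lcq a l" using lcq_pad[of l N a] l_def by simp
  finally show ?thesis by blast
qed

lemma lcq_scale: "real_of_rat q *\<^sub>R lcq a l = lcq a (map ((*) q) l)"
  unfolding lcq_def by (simp add: scaleR_sum_right of_rat_mult)

lemma lcq_nil: "lcq a [] = 0" unfolding lcq_def by simp

lemma lcq_single: "lcq a (replicate i 0 @ [1]) = a i"
proof -
  have "lcq a (replicate i 0 @ [1]) = (\<Sum>j<Suc i. real_of_rat (nth_default 0 (replicate i 0 @ [1]) j) *\<^sub>R a j)"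
    by (rule lcq_pad) simp
  also have "\<dots> = a i"
    by (simp add: nth_default_def nth_append)
  finally show ?thesis .
qed

definition LQ :: "(nat \<Rightarrow> 'x::real_vector) \<Rightarrow> 'x set" where
  "LQ a = range (lcq a)"

lemma countable_LQ: "countable (LQ a)"
  unfolding LQ_def by simp

lemma LQ_ne: "LQ a \<noteq> {}" unfolding LQ_def by simp

lemma in_LQ: "a i \<in> LQ a"
  unfolding LQ_def using lcq_single[of a i] by (metis rangeI)

lemma LQ_add: "x \<in> LQ a \<Longrightarrow> y \<in> LQ a \<Longrightarrow> x + y \<in> LQ a"
proof -
  assume "x \<in> LQ a" "y \<in> LQ a"
  then obtain l1 l2 where "x = lcq a l1" "y = lcq a l2" unfolding LQ_def by blast
  moreover obtain l where "lcq a l1 + lcq a l2 = lcq a l" using lcq_add by blast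
  ultimately show ?thesis unfolding LQ_def by simp
qed

lemma LQ_scale: "x \<in> LQ a \<Longrightarrow> real_of_rat q *\<^sub>R x \<in> LQ a"
proof -
  assume "x \<in> LQ a"
  then obtain l1 where "x = lcq a l1" unfolding LQ_def by blast
  then show ?thesis unfolding LQ_def using lcq_scale[of q a l1] by simp
qed

lemma subspace_closure_LQ:
  fixes a :: "nat \<Rightarrow> 'x::real_normed_vector"
  shows "subspace (closure (LQ a))"
  unfolding subspace_def
proof (intro conjI ballI allI)
  show "0 \<in> closure (LQ a)" using lcq_nil[of a] closure_subset unfolding LQ_def by (metis rangeI subsetD)
next
  fix x y assume x: "x \<in> closure (LQ a)" and y: "y \<in> closure (LQ a)"
  show "x + y \<in> closure (LQ a)" unfolding closure_approachable
  proof (intro allI impI)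
    fix e :: real assume e: "e > 0"
    obtain x' where x': "x' \<in> LQ a" "dist x' x < e/2" using x e unfolding closure_approachable by (meson half_gt_zero)
    obtain y' where y': "y' \<in> LQ a" "dist y' y < e/2" using y e unfolding closure_approachable by (meson half_gt_zero)
    have "dist (x' + y') (x + y) \<le> dist x' x + dist y' y"
      unfolding dist_norm by (metis add_diff_add norm_triangle_ineq)
    then show "\<exists>z\<in>LQ a. dist z (x + y) < e" using x' y' LQ_add by (intro bexI[of _ "x'+y'"]) auto
  qed
next
  fix c :: real and x assume x: "x \<in> closure (LQ a)"
  show "c *\<^sub>R x \<in> closure (LQ a)" unfolding closure_approachable
  proof (intro allI impI)
    fix e :: real assume e: "e > 0"
    define B where "B = norm x + 1"
    have B: "B > 0" unfolding B_def by (simp add: add_nonneg_pos)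
    obtain r where r: "r \<in> \<rat>" "c < r" "r < c + e / (2 * B)"
      using Rats_dense_in_real[of c "c + e/(2*B)"] e B by auto
    obtain q where q: "r = real_of_rat q" using r(1) Rats_cases by blast
    define \<delta> where "\<delta> = e / (2 * (\<bar>r\<bar> + 1))"
    have \<delta>: "\<delta> > 0" unfolding \<delta>_def using e by (simp add: add_nonneg_pos)
    obtain x' where x': "x' \<in> LQ a" "dist x' x < \<delta>" using x \<delta> unfolding closure_approachable by blast
    have "dist (r *\<^sub>R x') (c *\<^sub>R x) = norm (r *\<^sub>R (x' - x) + (r - c) *\<^sub>R x)"
      unfolding dist_norm by (simp add: algebra_simps)
    also have "\<dots> \<le> \<bar>r\<bar> * norm (x' - x) + \<bar>r - c\<bar> * norm x"
      by (metis norm_scaleR norm_triangle_ineq order_trans order_refl)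
    also have "\<bar>r\<bar> * norm (x' - x) \<le> \<bar>r\<bar> * \<delta>"
      using x'(2) by (simp add: dist_norm mult_left_mono)
    also have "\<bar>r\<bar> * \<delta> < e / 2"
    proof -
      have "\<bar>r\<bar> * \<delta> = e / 2 * (\<bar>r\<bar> / (\<bar>r\<bar> + 1))" unfolding \<delta>_def by (simp add: field_simps)
      also have "\<dots> < e / 2" using e by (simp add: field_simps)
      finally show ?thesis .
    qed
    also have "\<bar>r - c\<bar> * norm x \<le> e / (2 * B) * norm x" using r by (intro mult_right_mono) auto
    also have "e / (2 * B) * norm x \<le> e / 2"
    proof -
      have "norm x / B \<le> 1" using B unfolding B_def by simp
      hence "e / 2 * (norm x / B) \<le> e / 2" using e by (intro mult_left_le) auto
      moreover have "e / (2 * B) * norm x = e / 2 * (norm x / B)" by simp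
      ultimately show ?thesis by linarith
    qed
    finally have "dist (r *\<^sub>R x') (c *\<^sub>R x) < e" by simp
    moreover have "r *\<^sub>R x' \<in> LQ a" using LQ_scale[OF x'(1), of q] q by simp
    ultimately show "\<exists>z\<in>LQ a. dist z (c *\<^sub>R x) < e" by blast
  qed
qed

lemma blinfun_norm_approx:
  fixes f :: "'b::real_normed_vector \<Rightarrow>\<^sub>L real"
  assumes e: "e > 0"
  shows "\<exists>x. norm x \<le> 1 \<and> norm f - e \<le> blinfun_apply f x"
proof (rule ccontr)
  assume "\<not> ?thesis"
  hence H: "\<And>x. norm x \<le> 1 \<Longrightarrow> blinfun_apply f x < norm f - e" by (meson not_le)
  define K where "K = norm f - e"
  have K: "0 < K" using H[of 0] K_def by simp
  have "\<bar>blinfun_apply f x\<bar> \<le> K * norm x" for x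
  proof (cases "x = 0")
    case True then show ?thesis by simp
  next
    case False
    define v where "v = (1 / norm x) *\<^sub>R x"
    have nv: "norm v = 1" "norm (-v) = 1" using False unfolding v_def by simp_all
    have "blinfun_apply f v < K" "blinfun_apply f (-v) < K" using H nv K_def by auto
    hence "\<bar>blinfun_apply f v\<bar> \<le> K" by (simp add: blinfun.minus_right)
    moreover have "blinfun_apply f x = norm x * blinfun_apply f v"
      unfolding v_def using False by (simp add: blinfun.scaleR_right)
    moreover have "norm x * \<bar>blinfun_apply f v\<bar> \<le> norm x * K" using calculation(1) by (rule mult_left_mono) simp
    ultimately show ?thesis by (simp add: abs_mult mult.commute)
  qed
  hence "norm f \<le> K" using K by (intro norm_blinfun_bound) auto
  then show False using K_def e by simp
qed

lemma closure_LQ_sub: "LQ a \<subseteq> closure (LQ a)" by (rule closure_subset)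

lemma weakstar_subseq:
  fixes g :: "nat \<Rightarrow> ('b::real_normed_vector \<Rightarrow>\<^sub>L real)"
  assumes refl: "reflexive_space TYPE('b)" and gb: "\<And>n. norm (g n) \<le> 1"
  shows "\<exists>r h. strict_mono r \<and> (\<forall>y. (\<lambda>k. blinfun_apply (g (r k)) y) \<longlonglongrightarrow> blinfun_apply h y)"
proof -
  define G where "G = LQ g"
  define Gs where "Gs = from_nat_into G"
  have Gs_surj: "\<exists>i. Gs i = z" if "z \<in> G" for z
  proof -
    have "countable G" unfolding G_def by (rule countable_LQ)
    from from_nat_into_surj[OF this that] show ?thesis unfolding Gs_def .
  qed
  define w where "w i j = (SOME x. norm x \<le> 1 \<and> norm (Gs i) - 1 / real (Suc j) \<le> blinfun_apply (Gs i) x)" for i j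
  have w: "norm (w i j) \<le> 1 \<and> norm (Gs i) - 1 / real (Suc j) \<le> blinfun_apply (Gs i) (w i j)" for i j
    unfolding w_def by (rule someI_ex) (rule blinfun_norm_approx, simp)
  define u where "u n = w (fst (prod_decode n)) (snd (prod_decode n))" for n
  define V where "V = closure (LQ u)"
  have Vsub: "subspace V" unfolding V_def by (rule subspace_closure_LQ)
  have Vcl: "closed V" unfolding V_def by simp
  have wV: "w i j \<in> V" for i j
  proof -
    have "w i j = u (prod_encode (i, j))" unfolding u_def by simp
    moreover have "u (prod_encode (i, j)) \<in> closure (LQ u)" by (rule subsetD[OF closure_subset in_LQ])
    ultimately show ?thesis unfolding V_def by simp
  qed
  define Z where "Z = closure G"
  have Zsub: "subspace Z" unfolding Z_def G_def by (rule subspace_closure_LQ)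
  have gZ: "g n \<in> Z" for n unfolding Z_def G_def by (rule subsetD[OF closure_subset in_LQ])
  have norming: "\<exists>v\<in>V. norm v \<le> 1 \<and> norm z - e \<le> blinfun_apply z v" if z: "z \<in> Z" and e: "e > 0" for z e
  proof -
    obtain z' where z': "z' \<in> G" "dist z' z < e/3" using z e unfolding Z_def closure_approachable
      by (meson divide_pos_pos zero_less_numeral)
    obtain i where i: "Gs i = z'" using Gs_surj[OF z'(1)] by blast
    obtain j where j: "1 / real (Suc j) < e/3"
      using reals_Archimedean[of "e/3"] e by (auto simp: inverse_eq_divide)
    define v where "v = w i j"
    have v1: "norm v \<le> 1" and v2: "norm z' - 1 / real (Suc j) \<le> blinfun_apply z' v"
      using w[of i j] i unfolding v_def by auto
    have "\<bar>blinfun_apply z' v - blinfun_apply z v\<bar> \<le> norm (z' - z) * norm v"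
      using norm_blinfun[of "z' - z" v] by (simp add: blinfun.diff_left)
    also have "\<dots> \<le> norm (z' - z)" using v1 by (simp add: mult_left_le)
    finally have d1: "\<bar>blinfun_apply z' v - blinfun_apply z v\<bar> \<le> norm (z' - z)" .
    have d2: "norm z \<le> norm z' + norm (z' - z)" using norm_triangle_ineq4[of z' "z' - z"] by simp
    have "norm (z' - z) < e/3" using z'(2) by (simp add: dist_norm)
    then have "norm z - e \<le> blinfun_apply z v" using d1 d2 v2 j by linarith
    then show ?thesis using v1 wV v_def by blast
  qed
  define Vp where "Vp = {h::'b \<Rightarrow>\<^sub>L real. \<forall>v\<in>V. blinfun_apply h v = 0}"
  have Vpsub: "subspace Vp" unfolding subspace_def Vp_def
    by (simp add: blinfun.add_left blinfun.scaleR_left)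
  have perp_norm: "norm z \<le> norm (z + h)" if z: "z \<in> Z" and h: "h \<in> Vp" for z h
  proof (rule field_le_epsilon)
    fix e :: real assume e: "e > 0"
    obtain v where v: "v \<in> V" "norm v \<le> 1" "norm z - e \<le> blinfun_apply z v" using norming[OF z e] by blast
    have "blinfun_apply (z + h) v = blinfun_apply z v" using h v(1) unfolding Vp_def by (simp add: blinfun.add_left)
    moreover have "blinfun_apply (z + h) v \<le> norm (z + h) * norm v"
    proof -
      have "\<bar>blinfun_apply (z + h) v\<bar> \<le> norm (z + h) * norm v" using norm_blinfun[of "z + h" v] by simp
      then show ?thesis by (rule abs_le_D1)
    qed
    moreover have "norm (z + h) * norm v \<le> norm (z + h)" using v(2) by (simp add: mult_left_le)
    ultimately show "norm z \<le> norm (z + h) + e" using v(3) by linarith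
  qed
  have key: "\<exists>v\<in>V. \<forall>n. blinfun_apply (g n) v = blinfun_apply (g n) y" for y
  proof -
    define S where "S = {z + h | z h. z \<in> Z \<and> h \<in> Vp}"
    have uniq: "z = z'" if "z \<in> Z" "h \<in> Vp" "z' \<in> Z" "h' \<in> Vp" "z + h = z' + h'" for z h z' h'
    proof -
      have "z - z' \<in> Z" using Zsub that by (simp add: subspace_diff)
      moreover have "h - h' \<in> Vp" using Vpsub that by (simp add: subspace_diff)
      ultimately have "norm (z - z') \<le> norm ((z - z') + (h - h'))" by (rule perp_norm)
      also have "(z - z') + (h - h') = 0" using that(5) by (simp add: algebra_simps)
      finally show ?thesis by simp
    qed
    define \<phi> where "\<phi> s = blinfun_apply (SOME z. z \<in> Z \<and> (\<exists>h\<in>Vp. s = z + h)) y" for s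
    have \<phi>E: "\<phi> (z + h) = blinfun_apply z y" if "z \<in> Z" "h \<in> Vp" for z h
    proof -
      have "\<exists>z'. z' \<in> Z \<and> (\<exists>h'\<in>Vp. z + h = z' + h')" using that by blast
      hence "(SOME z'. z' \<in> Z \<and> (\<exists>h'\<in>Vp. z + h = z' + h')) \<in> Z \<and>
               (\<exists>h'\<in>Vp. z + h = (SOME z'. z' \<in> Z \<and> (\<exists>h'\<in>Vp. z + h = z' + h')) + h')"
        by (rule someI_ex)
      then obtain h' where h': "(SOME z'. z' \<in> Z \<and> (\<exists>h'\<in>Vp. z + h = z' + h')) \<in> Z" "h' \<in> Vp"
         "z + h = (SOME z'. z' \<in> Z \<and> (\<exists>h'\<in>Vp. z + h = z' + h')) + h'" by blast
      have "z = (SOME z'. z' \<in> Z \<and> (\<exists>h'\<in>Vp. z + h = z' + h'))" by (rule uniq[OF that h'(1) h'(2) h'(3)])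
      then show ?thesis unfolding \<phi>_def by simp
    qed
    have memS: "\<exists>z h. z \<in> Z \<and> h \<in> Vp \<and> s = z + h" if "s \<in> S" for s using that unfolding S_def by blast
    have Ssub: "subspace S" unfolding subspace_def
    proof (intro conjI ballI allI)
      show "0 \<in> S" unfolding S_def using subspace_0[OF Zsub] subspace_0[OF Vpsub] by force
    next
      fix x y assume xS: "x \<in> S" and yS: "y \<in> S"
      obtain z1 h1 where "z1 \<in> Z" "h1 \<in> Vp" "x = z1 + h1" using memS[OF xS] by blast
      moreover obtain z2 h2 where "z2 \<in> Z" "h2 \<in> Vp" "y = z2 + h2" using memS[OF yS] by blast
      moreover have "x + y = (z1 + z2) + (h1 + h2)" using calculation by (simp add: algebra_simps)
      ultimately show "x + y \<in> S" unfolding S_def using subspace_add[OF Zsub] subspace_add[OF Vpsub] by blast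
    next
      fix c x assume xS: "x \<in> S"
      obtain z1 h1 where "z1 \<in> Z" "h1 \<in> Vp" "x = z1 + h1" using memS[OF xS] by blast
      moreover have "c *\<^sub>R x = (c *\<^sub>R z1) + (c *\<^sub>R h1)" using calculation by (simp add: algebra_simps)
      ultimately show "c *\<^sub>R x \<in> S" unfolding S_def using subspace_scale[OF Zsub] subspace_scale[OF Vpsub] by blast
    qed
    have "\<exists>\<Psi>::('b \<Rightarrow>\<^sub>L real) \<Rightarrow>\<^sub>L real. (\<forall>x\<in>S. blinfun_apply \<Psi> x = \<phi> x) \<and> (\<forall>x. \<bar>blinfun_apply \<Psi> x\<bar> \<le> norm y * norm x)"
    proof (rule hb_normed[OF Ssub])
      fix a b assume aS: "a \<in> S" and bS: "b \<in> S"
      obtain z1 h1 where zh1: "z1 \<in> Z" "h1 \<in> Vp" "a = z1 + h1" using memS[OF aS] by blast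
      obtain z2 h2 where zh2: "z2 \<in> Z" "h2 \<in> Vp" "b = z2 + h2" using memS[OF bS] by blast
      note zh = zh1 zh2
      have e: "a + b = (z1 + z2) + (h1 + h2)" using zh by (simp add: algebra_simps)
      have "\<phi> (a + b) = blinfun_apply (z1 + z2) y" unfolding e
        by (rule \<phi>E) (use subspace_add[OF Zsub] subspace_add[OF Vpsub] zh in blast)+
      then show "\<phi> (a + b) = \<phi> a + \<phi> b" using \<phi>E zh by (simp add: blinfun.add_left)
    next
      fix c a assume aS: "a \<in> S"
      obtain z1 h1 where zh: "z1 \<in> Z" "h1 \<in> Vp" "a = z1 + h1" using memS[OF aS] by blast
      have e: "c *\<^sub>R a = (c *\<^sub>R z1) + (c *\<^sub>R h1)" using zh by (simp add: algebra_simps)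
      have "\<phi> (c *\<^sub>R a) = blinfun_apply (c *\<^sub>R z1) y" unfolding e
        by (rule \<phi>E) (use subspace_scale[OF Zsub] subspace_scale[OF Vpsub] zh in blast)+
      then show "\<phi> (c *\<^sub>R a) = c * \<phi> a" using \<phi>E zh by (simp add: blinfun.scaleR_left)
    next
      fix a assume aS: "a \<in> S"
      obtain z1 h1 where zh: "z1 \<in> Z" "h1 \<in> Vp" "a = z1 + h1" using memS[OF aS] by blast
      have "\<bar>\<phi> a\<bar> = \<bar>blinfun_apply z1 y\<bar>" using \<phi>E zh by simp
      also have "\<dots> \<le> norm z1 * norm y" using norm_blinfun[of z1 y] by simp
      also have "\<dots> \<le> norm a * norm y" using perp_norm[OF zh(1,2)] zh(3) by (simp add: mult_right_mono)
      finally show "\<bar>\<phi> a\<bar> \<le> norm y * norm a" by (simp add: mult.commute)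
    qed simp
    then obtain \<Psi> :: "('b \<Rightarrow>\<^sub>L real) \<Rightarrow>\<^sub>L real" where \<Psi>: "\<forall>x\<in>S. blinfun_apply \<Psi> x = \<phi> x" by blast
    obtain w' where w': "\<And>f. blinfun_apply \<Psi> f = blinfun_apply f w'"
      using refl unfolding reflexive_space_def by blast
    have Z0: "0 \<in> Z" using Zsub by (simp add: subspace_0)
    have Vp0: "0 \<in> Vp" using Vpsub by (simp add: subspace_0)
    have hw: "blinfun_apply h w' = 0" if "h \<in> Vp" for h
    proof -
      have "0 + h \<in> S" unfolding S_def using Z0 that by blast
      hence hS: "h \<in> S" by simp
      have "blinfun_apply h w' = \<phi> (0 + h)" using w'[of h] \<Psi> hS by simp
      also have "\<dots> = 0" using \<phi>E[OF Z0 that] by simp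
      finally show ?thesis .
    qed
    have w'V: "w' \<in> V"
    proof (rule ccontr)
      assume nV: "w' \<notin> V"
      obtain f :: "'b \<Rightarrow>\<^sub>L real" where f: "\<forall>v\<in>V. blinfun_apply f v = 0" "blinfun_apply f w' = infdist w' V"
        using hb_separate[OF Vsub Vcl nV] by blast
      have "V \<noteq> {}" using subspace_0[OF Vsub] by blast
      hence "infdist w' V \<noteq> 0" using in_closed_iff_infdist_zero[OF Vcl, of w'] nV by simp
      moreover have "f \<in> Vp" unfolding Vp_def using f(1) by blast
      ultimately show False using hw f(2) by simp
    qed
    have "blinfun_apply (g n) w' = blinfun_apply (g n) y" for n
    proof -
      have "g n + 0 \<in> S" unfolding S_def using gZ Vp0 by blast
      hence gS: "g n \<in> S" by simp
      have "blinfun_apply (g n) w' = \<phi> (g n + 0)" using w'[of "g n"] \<Psi> gS by simp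
      also have "\<dots> = blinfun_apply (g n) y" using \<phi>E[OF gZ Vp0] by simp
      finally show ?thesis .
    qed
    then show ?thesis using w'V by blast
  qed
  define Q where "Q = LQ u"
  define d where "d = from_nat_into Q"
  have dsurj: "\<exists>i. d i = q" if "q \<in> Q" for q
  proof -
    have "countable Q" unfolding Q_def by (rule countable_LQ)
    from from_nat_into_surj[OF this that] show ?thesis unfolding d_def .
  qed
  have gbd: "\<bar>blinfun_apply (g n) x\<bar> \<le> norm x" for n x
  proof -
    have "\<bar>blinfun_apply (g n) x\<bar> \<le> norm (g n) * norm x" using norm_blinfun[of "g n" x] by simp
    also have "\<dots> \<le> norm x" using gb[of n] by (simp add: mult_left_le_one_le)
    finally show ?thesis .
  qed
  interpret S: subseqs "\<lambda>i s. convergent (\<lambda>k. blinfun_apply (g (s k)) (d i))"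
  proof
    fix i and s :: "nat \<Rightarrow> nat" assume "strict_mono s"
    obtain f where f: "strict_mono f" "monoseq (\<lambda>n. blinfun_apply (g (s (f n))) (d i))"
      using seq_monosub[of "\<lambda>k. blinfun_apply (g (s k)) (d i)"] by blast
    have "Bseq (\<lambda>n. blinfun_apply (g (s (f n))) (d i))"
      using gbd by (intro BseqI'[of _ "norm (d i)"]) simp
    hence "convergent (\<lambda>n. blinfun_apply (g (s (f n))) (d i))" using f(2) by (rule Bseq_monoseq_convergent)
    then show "\<exists>r'. strict_mono r' \<and> convergent (\<lambda>k. blinfun_apply (g ((s \<circ> r') k)) (d i))"
      using f(1) by (intro exI[of _ f]) simp
  qed
  define r where "r = S.diagseq"
  have r: "strict_mono r" unfolding r_def by (rule S.subseq_diagseq)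
  have convQ: "convergent (\<lambda>k. blinfun_apply (g (r k)) (d i))" for i
  proof -
    have "convergent (\<lambda>k. blinfun_apply (g ((S.diagseq \<circ> (+) (Suc i)) k)) (d i))"
    proof (rule S.diagseq_holds)
      fix r' :: "nat \<Rightarrow> nat" and s n assume "strict_mono r'" "convergent (\<lambda>k. blinfun_apply (g (s k)) (d n))"
      then show "convergent (\<lambda>k. blinfun_apply (g ((s \<circ> r') k)) (d n))"
        using convergent_subseq_convergent[of "\<lambda>k. blinfun_apply (g (s k)) (d n)" r'] by (simp add: o_def)
    qed
    hence "convergent (\<lambda>k. blinfun_apply (g (r (k + Suc i))) (d i))" unfolding r_def by (simp add: add.commute)
    then show ?thesis using convergent_ignore_initial_segment[of "\<lambda>k. blinfun_apply (g (r k)) (d i)" "Suc i"] by simp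
  qed
  have convV: "convergent (\<lambda>k. blinfun_apply (g (r k)) v)" if v: "v \<in> V" for v
    unfolding Cauchy_convergent_iff[symmetric]
  proof (rule CauchyI)
    fix e :: real assume e: "e > 0"
    obtain q where q: "q \<in> Q" "dist q v < e/3" using v e unfolding V_def Q_def closure_approachable
      by (meson divide_pos_pos zero_less_numeral)
    obtain i where i: "d i = q" using dsurj[OF q(1)] by blast
    have "Cauchy (\<lambda>k. blinfun_apply (g (r k)) (d i))" using convQ[of i] Cauchy_convergent_iff by blast
    then obtain M where M: "\<forall>m\<ge>M. \<forall>n\<ge>M. norm (blinfun_apply (g (r m)) (d i) - blinfun_apply (g (r n)) (d i)) < e/3"
      using e unfolding Cauchy_iff by (meson divide_pos_pos zero_less_numeral)
    have close: "\<bar>blinfun_apply (g n) v - blinfun_apply (g n) q\<bar> < e/3" for n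
    proof -
      have "\<bar>blinfun_apply (g n) v - blinfun_apply (g n) q\<bar> = \<bar>blinfun_apply (g n) (v - q)\<bar>"
        by (simp add: blinfun.diff_right)
      also have "\<dots> \<le> norm (v - q)" by (rule gbd)
      also have "\<dots> < e/3" using q(2) by (simp add: dist_norm norm_minus_commute)
      finally show ?thesis .
    qed
    show "\<exists>M. \<forall>m\<ge>M. \<forall>n\<ge>M. norm (blinfun_apply (g (r m)) v - blinfun_apply (g (r n)) v) < e"
    proof (intro exI allI impI)
      fix m n assume "M \<le> m" "M \<le> n"
      hence "\<bar>blinfun_apply (g (r m)) q - blinfun_apply (g (r n)) q\<bar> < e/3" using M i by auto
      then show "norm (blinfun_apply (g (r m)) v - blinfun_apply (g (r n)) v) < e"
        using close[of "r m"] close[of "r n"] unfolding real_norm_def abs_less_iff by linarith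
    qed
  qed
  have convall: "convergent (\<lambda>k. blinfun_apply (g (r k)) y)" for y
  proof -
    obtain v where v: "v \<in> V" "\<forall>n. blinfun_apply (g n) v = blinfun_apply (g n) y" using key by blast
    then show ?thesis using convV[OF v(1)] by simp
  qed
  define h0 where "h0 y = lim (\<lambda>k. blinfun_apply (g (r k)) y)" for y
  have h0: "(\<lambda>k. blinfun_apply (g (r k)) y) \<longlonglongrightarrow> h0 y" for y
    unfolding h0_def using convall convergent_LIMSEQ_iff by blast
  have bl: "bounded_linear h0"
  proof (rule bounded_linear_intro[of _ 1])
    fix x y
    have "(\<lambda>k. blinfun_apply (g (r k)) (x + y)) \<longlonglongrightarrow> h0 x + h0 y"
      using tendsto_add[OF h0[of x] h0[of y]] by (simp add: blinfun.add_right)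
    then show "h0 (x + y) = h0 x + h0 y" using h0[of "x+y"] LIMSEQ_unique by blast
  next
    fix c x
    have "(\<lambda>k. blinfun_apply (g (r k)) (c *\<^sub>R x)) \<longlonglongrightarrow> c * h0 x"
      using tendsto_mult_left[OF h0[of x], of c] by (simp add: blinfun.scaleR_right)
    then show "h0 (c *\<^sub>R x) = c *\<^sub>R h0 x" using h0[of "c *\<^sub>R x"] LIMSEQ_unique by fastforce
  next
    fix x
    have "(\<lambda>k. \<bar>blinfun_apply (g (r k)) x\<bar>) \<longlonglongrightarrow> \<bar>h0 x\<bar>" using tendsto_rabs[OF h0[of x]] .
    hence "\<bar>h0 x\<bar> \<le> norm x" by (rule LIMSEQ_le_const2) (use gbd in blast)
    then show "norm (h0 x) \<le> norm x * 1" by simp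
  qed
  show ?thesis
    using r h0 bounded_linear_Blinfun_apply[OF bl] by (intro exI[of _ r] exI[of _ "Blinfun h0"]) simp
qed

lemma subseq_weakly_null:
  assumes "weakly_null x" "strict_mono s"
  shows "weakly_null (x \<circ> s)"
  unfolding weakly_null_def
proof
  fix f :: "'a \<Rightarrow>\<^sub>L real"
  have "(\<lambda>n. blinfun_apply f (x n)) \<longlonglongrightarrow> 0" using assms(1) unfolding weakly_null_def by blast
  from LIMSEQ_subseq_LIMSEQ[OF this assms(2)] show "(\<lambda>n. blinfun_apply f ((x \<circ> s) n)) \<longlonglongrightarrow> 0"
    by (simp add: o_def)
qed

lemma wdp_cc:
  fixes T :: "'a::real_normed_vector \<Rightarrow>\<^sub>L 'b::real_normed_vector"
  assumes refl: "reflexive_space TYPE('b)" and wdp: "weak_Dunford_Pettis T" and x: "weakly_null x"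
  shows "(\<lambda>n. norm (blinfun_apply T (x n))) \<longlonglongrightarrow> 0"
proof (rule ccontr)
  assume nc: "\<not> ?thesis"
  then obtain e where e: "e > 0" and inf: "\<forall>N. \<exists>n\<ge>N. e \<le> norm (blinfun_apply T (x n))"
    unfolding LIMSEQ_def dist_real_def by (auto simp: not_less)
  have "infinite {n. e \<le> norm (blinfun_apply T (x n))}"
    unfolding infinite_nat_iff_unbounded_le using inf by blast
  then obtain \<sigma> :: "nat \<Rightarrow> nat" where \<sigma>: "strict_mono \<sigma>" and \<sigma>e: "\<And>k. e \<le> norm (blinfun_apply T (x (\<sigma> k)))"
    using infinite_enumerate by blast
  define g where "g k = (SOME f::'b \<Rightarrow>\<^sub>L real. blinfun_apply f (blinfun_apply T (x (\<sigma> k))) = norm (blinfun_apply T (x (\<sigma> k)))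
        \<and> (\<forall>y. \<bar>blinfun_apply f y\<bar> \<le> norm y))" for k
  have g: "blinfun_apply (g k) (blinfun_apply T (x (\<sigma> k))) = norm (blinfun_apply T (x (\<sigma> k)))
        \<and> (\<forall>y. \<bar>blinfun_apply (g k) y\<bar> \<le> norm y)" for k
    unfolding g_def by (rule someI_ex) (rule hb_norming)
  have gn: "norm (g k) \<le> 1" for k
    using g[of k] by (intro norm_blinfun_bound) auto
  obtain r and h :: "'b \<Rightarrow>\<^sub>L real" where r: "strict_mono r"
    and conv: "\<forall>y. (\<lambda>k. blinfun_apply (g (r k)) y) \<longlonglongrightarrow> blinfun_apply h y"
    using weakstar_subseq[OF refl, of g] gn by blast
  define x' where "x' = x \<circ> (\<sigma> \<circ> r)"
  have x': "weakly_null x'" unfolding x'_def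
    by (rule subseq_weakly_null[OF x]) (rule strict_mono_o[OF \<sigma> r])
  define f' where "f' k = g (r k) - h" for k
  have f': "weakly_null f'" unfolding weakly_null_def
  proof
    fix \<Phi> :: "('b \<Rightarrow>\<^sub>L real) \<Rightarrow>\<^sub>L real"
    obtain y where y: "\<And>f. blinfun_apply \<Phi> f = blinfun_apply f y" using refl unfolding reflexive_space_def by blast
    have "(\<lambda>k. blinfun_apply (g (r k)) y - blinfun_apply h y) \<longlonglongrightarrow> blinfun_apply h y - blinfun_apply h y"
      using conv by (intro tendsto_diff) auto
    then show "(\<lambda>n. blinfun_apply \<Phi> (f' n)) \<longlonglongrightarrow> 0" unfolding f'_def y by (simp add: blinfun.diff_left)
  qed
  have l1: "(\<lambda>k. blinfun_apply (f' k) (blinfun_apply T (x' k))) \<longlonglongrightarrow> 0"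
    using wdp x' f' unfolding weak_Dunford_Pettis_def by blast
  have l2: "(\<lambda>k. blinfun_apply (h o\<^sub>L T) (x' k)) \<longlonglongrightarrow> 0"
    using x' unfolding weakly_null_def by blast
  have "(\<lambda>k. blinfun_apply (f' k) (blinfun_apply T (x' k)) + blinfun_apply (h o\<^sub>L T) (x' k)) \<longlonglongrightarrow> 0 + 0"
    by (rule tendsto_add[OF l1 l2])
  moreover have "blinfun_apply (f' k) (blinfun_apply T (x' k)) + blinfun_apply (h o\<^sub>L T) (x' k)
      = norm (blinfun_apply T (x (\<sigma> (r k))))" for k
    using g[of "r k"] unfolding f'_def x'_def by (simp add: blinfun.diff_left)
  ultimately have "(\<lambda>k. norm (blinfun_apply T (x (\<sigma> (r k))))) \<longlonglongrightarrow> 0" by simp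
  hence "e \<le> 0" by (rule LIMSEQ_le_const) (use \<sigma>e in blast)
  then show False using e by simp
qed

context banach_lattice
begin
subclass lattice_ab_group_add ..
end

lemma inf_scaleR:
  fixes a b :: "'a::banach_lattice"
  assumes c: "0 \<le> c"
  shows "c *\<^sub>R inf a b = inf (c *\<^sub>R a) (c *\<^sub>R b)"
proof (cases "c = 0")
  case True then show ?thesis by simp
next
  case False
  hence cp: "c > 0" using c by simp
  have "c *\<^sub>R inf a b \<le> inf (c *\<^sub>R a) (c *\<^sub>R b)"
    using c by (simp add: scaleR_left_mono)
  moreover have "inf (c *\<^sub>R a) (c *\<^sub>R b) \<le> c *\<^sub>R inf a b"
  proof -
    have "(1/c) *\<^sub>R inf (c *\<^sub>R a) (c *\<^sub>R b) \<le> (1/c) *\<^sub>R (c *\<^sub>R a)"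
      using cp by (intro scaleR_left_mono) auto
    moreover have "(1/c) *\<^sub>R inf (c *\<^sub>R a) (c *\<^sub>R b) \<le> (1/c) *\<^sub>R (c *\<^sub>R b)"
      using cp by (intro scaleR_left_mono) auto
    ultimately have "(1/c) *\<^sub>R inf (c *\<^sub>R a) (c *\<^sub>R b) \<le> inf a b" using cp by simp
    hence "c *\<^sub>R ((1/c) *\<^sub>R inf (c *\<^sub>R a) (c *\<^sub>R b)) \<le> c *\<^sub>R inf a b"
      using c by (rule scaleR_left_mono)
    then show ?thesis using cp by simp
  qed
  ultimately show ?thesis by (rule antisym)
qed

lemma sup_scaleR:
  fixes a b :: "'a::banach_lattice"
  assumes c: "0 \<le> c"
  shows "c *\<^sub>R sup a b = sup (c *\<^sub>R a) (c *\<^sub>R b)"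
proof -
  have "sup a b = - inf (-a) (-b)" by (rule sup_eq_neg_inf)
  hence "c *\<^sub>R sup a b = c *\<^sub>R (- inf (-a) (-b))" by (rule arg_cong)
  also have "\<dots> = - (c *\<^sub>R inf (-a) (-b))" by (rule scaleR_minus_right)
  also have "\<dots> = - inf (c *\<^sub>R (-a)) (c *\<^sub>R (-b))" by (simp only: inf_scaleR[OF c])
  also have "\<dots> = - inf (-(c *\<^sub>R a)) (-(c *\<^sub>R b))" by (simp only: scaleR_minus_right)
  also have "\<dots> = sup (c *\<^sub>R a) (c *\<^sub>R b)" by (rule sup_eq_neg_inf[symmetric])
  finally show ?thesis .
qed

lemma pprt_scaleR:
  fixes a :: "'a::banach_lattice"
  assumes "0 \<le> c" shows "pprt (c *\<^sub>R a) = c *\<^sub>R pprt a"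
  unfolding pprt_def using sup_scaleR[OF assms, of a 0] by simp

lemma lmod_nonneg: "0 \<le> lmod (x::'a::banach_lattice)"
proof -
  have "x \<le> lmod x" "- x \<le> lmod x" unfolding lmod_def by simp_all
  hence "x + (- x) \<le> lmod x + lmod x" by (rule add_mono)
  then show ?thesis by simp
qed

lemma lmod_ge: "x \<le> lmod (x::'a::banach_lattice)" "- x \<le> lmod x"
  unfolding lmod_def by simp_all

lemma lmod_pos: "0 \<le> (x::'a::banach_lattice) \<Longrightarrow> lmod x = x"
  unfolding lmod_def by (rule sup_absorb1) (meson neg_le_0_iff_le order_trans)

lemma norm_mono_lat: "0 \<le> a \<Longrightarrow> a \<le> b \<Longrightarrow> norm a \<le> norm (b::'a::banach_lattice)"
  by (rule lattice_norm_mono) (metis lmod_def lmod_pos order_trans)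

lemma norm_lmod: "norm (lmod (x::'a::banach_lattice)) = norm x"
proof -
  have "lmod (lmod x) = lmod x" by (rule lmod_pos[OF lmod_nonneg])
  hence "sup (lmod x) (- lmod x) = sup x (- x)" unfolding lmod_def by simp
  then show ?thesis using lattice_norm_mono[of x "lmod x"] lattice_norm_mono[of "lmod x" x] by simp
qed

lemma norm_lmod_le: "lmod a \<le> lmod b \<Longrightarrow> norm a \<le> norm (b::'a::banach_lattice)"
  by (rule lattice_norm_mono) (simp add: lmod_def)

lemma pprt_le_lmod: "pprt x \<le> lmod (x::'a::banach_lattice)"
  unfolding pprt_def by (rule sup_least[OF lmod_ge(1) lmod_nonneg])

lemma norm_pprt: "norm (pprt x) \<le> norm (x::'a::banach_lattice)"
proof -
  have "norm (pprt x) \<le> norm (lmod x)" by (rule norm_mono_lat[OF zero_le_pprt pprt_le_lmod])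
  then show ?thesis by (simp add: norm_lmod)
qed

lemma pprt_decomp: "x = pprt x - pprt (- (x::'a::banach_lattice))"
  using prts[of x] by (simp add: pprt_neg)

lemma inf_add_le:
  fixes x a b :: "'a::banach_lattice"
  assumes "0 \<le> x" "0 \<le> a" "0 \<le> b"
  shows "inf x (a + b) \<le> inf x a + inf x b"
proof -
  have "inf x a + inf x b = inf (x + inf x b) (a + inf x b)" by (rule add_inf_distrib_right)
  also have "\<dots> = inf (inf (x + x) (x + b)) (inf (a + x) (a + b))"
    by (simp add: add_inf_distrib_left)
  finally have e: "inf x a + inf x b = inf (inf (x + x) (x + b)) (inf (a + x) (a + b))" .
  have "inf x (a + b) \<le> x + x" using assms by (meson add_increasing inf.coboundedI1 order_refl)
  moreover have "inf x (a + b) \<le> x + b" using assms by (meson add_increasing2 inf.coboundedI1 order_refl)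
  moreover have "inf x (a + b) \<le> a + x" using assms by (meson add_increasing inf.coboundedI1 order_refl)
  moreover have "inf x (a + b) \<le> a + b" by simp
  ultimately show ?thesis unfolding e by simp
qed

lemma disj_add_sup:
  fixes a b :: "'a::banach_lattice"
  assumes "inf a b = 0" shows "a + b = sup a b"
  using add_eq_inf_sup[of a b] assms by simp

lemma sub_pprt_inf: "a - pprt (a - b) = inf a (b::'a::banach_lattice)"
proof -
  have "a - pprt (a - b) = a + inf (b - a) 0"
    unfolding pprt_def by (simp add: diff_sup_eq_inf)
  also have "\<dots> = inf (a + (b - a)) (a + 0)" by (rule add_inf_distrib_left)
  finally show ?thesis by (simp add: inf_commute)
qed

lemma inf_add_const_le:
  fixes a B c :: "'a::banach_lattice"
  assumes "0 \<le> c" shows "inf a (B + c) \<le> inf a B + c"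
proof -
  have "inf a B + c = inf (a + c) (B + c)" by (rule add_inf_distrib_right)
  moreover have "inf a (B + c) \<le> a + c" using assms by (meson add_increasing2 inf.coboundedI1 order_refl)
  ultimately show ?thesis by simp
qed

lemma pprt_disj: "inf (pprt q) (pprt (- (q::'a::banach_lattice))) = 0"
proof -
  have "pprt (- q) = pprt q - q" using pprt_decomp[of q] by (simp add: algebra_simps)
  hence "inf (pprt q) (pprt (- q)) = inf (pprt q + 0) (pprt q + (- q))" by simp
  also have "\<dots> = pprt q + inf 0 (- q)" by (simp add: add_inf_distrib_left)
  also have "inf 0 (- q) = - pprt q" unfolding pprt_def by (simp add: neg_sup_eq_inf inf_commute)
  finally show ?thesis by simp
qed

lemma disj_key:
  fixes a b :: "'a::banach_lattice"
  assumes a: "0 \<le> a" and \<alpha>: "0 < \<alpha>" and \<beta>: "0 < \<beta>" and ab: "1 \<le> \<alpha> * \<beta>"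
  shows "inf (pprt (a - \<alpha> *\<^sub>R b)) (pprt (b - \<beta> *\<^sub>R a)) = 0"
proof -
  define p where "p = a - \<alpha> *\<^sub>R b"
  define q where "q = b - \<beta> *\<^sub>R a"
  have "p + \<alpha> *\<^sub>R q = (1 - \<alpha> * \<beta>) *\<^sub>R a" unfolding p_def q_def by (simp add: algebra_simps)
  also have "\<dots> \<le> 0" using ab a by (simp add: scaleR_nonpos_nonneg)
  finally have "p \<le> \<alpha> *\<^sub>R (- q)" by (simp add: add_eq_0_iff2 le_eq_neg)
  hence "pprt p \<le> pprt (\<alpha> *\<^sub>R (- q))" by (rule pprt_mono)
  also have "\<dots> = \<alpha> *\<^sub>R pprt (- q)" by (rule pprt_scaleR) (use \<alpha> in simp)
  finally have pq: "pprt p \<le> \<alpha> *\<^sub>R pprt (- q)" .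
  define c where "c = max \<alpha> 1"
  have c: "0 \<le> c" "\<alpha> \<le> c" "1 \<le> c" unfolding c_def by auto
  have "inf (pprt p) (pprt q) \<le> inf (c *\<^sub>R pprt (- q)) (c *\<^sub>R pprt q)"
  proof (rule inf_mono)
    show "pprt p \<le> c *\<^sub>R pprt (- q)" using pq scaleR_right_mono[OF c(2) zero_le_pprt[of "-q"]] by simp
    show "pprt q \<le> c *\<^sub>R pprt q" using scaleR_right_mono[OF c(3) zero_le_pprt[of q]] by simp
  qed
  also have "\<dots> = c *\<^sub>R inf (pprt (- q)) (pprt q)" by (rule inf_scaleR[OF c(1), symmetric])
  also have "\<dots> = 0" using pprt_disj[of q] by (simp add: inf_commute)
  finally have "inf (pprt p) (pprt q) \<le> 0" .
  moreover have "0 \<le> inf (pprt p) (pprt q)" by simp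
  ultimately show ?thesis unfolding p_def q_def by (rule antisym)
qed

lemma posf_def: "dual_le 0 f \<longleftrightarrow> (\<forall>x. 0 \<le> x \<longrightarrow> 0 \<le> blinfun_apply f x)"
  unfolding dual_le_def by simp

lemma posf_mono:
  assumes "dual_le 0 f" "a \<le> b" shows "blinfun_apply f a \<le> blinfun_apply f b"
proof -
  have "0 \<le> blinfun_apply f (b - a)" using assms unfolding posf_def by simp
  then show ?thesis by (simp add: blinfun.diff_right)
qed

lemma posf_abs:
  assumes "dual_le 0 f" shows "\<bar>blinfun_apply f x\<bar> \<le> blinfun_apply f (lmod x)"
proof -
  have "blinfun_apply f x \<le> blinfun_apply f (lmod x)" by (rule posf_mono[OF assms lmod_ge(1)])
  moreover have "blinfun_apply f (- x) \<le> blinfun_apply f (lmod x)" by (rule posf_mono[OF assms lmod_ge(2)])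
  ultimately show ?thesis by (simp add: blinfun.minus_right)
qed

lemma ext_pos:
  fixes p :: "'a::banach_lattice \<Rightarrow> real"
  assumes add: "\<And>x y. 0 \<le> x \<Longrightarrow> 0 \<le> y \<Longrightarrow> p (x + y) = p x + p y"
    and hom: "\<And>c x. 0 \<le> c \<Longrightarrow> 0 \<le> x \<Longrightarrow> p (c *\<^sub>R x) = c * p x"
    and bnd: "\<And>x. 0 \<le> x \<Longrightarrow> 0 \<le> p x \<and> p x \<le> K * norm x"
    and K: "0 \<le> K"
  shows "\<exists>\<phi> :: 'a \<Rightarrow>\<^sub>L real. \<forall>x. 0 \<le> x \<longrightarrow> blinfun_apply \<phi> x = p x"
proof -
  define \<phi>0 where "\<phi>0 x = p (pprt x) - p (pprt (- x))" for x
  have p0: "p 0 = 0" using hom[of 0 0] by simp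
  have Pn: "0 \<le> pprt x" for x :: 'a by simp
  have lin_add: "\<phi>0 (x + y) = \<phi>0 x + \<phi>0 y" for x y
  proof -
    have e0: "pprt (x + y) - pprt (- (x + y)) = (pprt x - pprt (- x)) + (pprt y - pprt (- y))"
      using pprt_decomp[of x] pprt_decomp[of y] pprt_decomp[of "x+y"] by simp
    hence e1: "pprt (x + y) = (pprt x - pprt (- x)) + (pprt y - pprt (- y)) + pprt (- (x + y))"
      by (simp add: diff_eq_eq)
    have e: "pprt (x + y) + pprt (- x) + pprt (- y) = pprt x + pprt y + pprt (- (x + y))"
      unfolding e1 by (simp add: algebra_simps)
    have "p (pprt (x + y) + pprt (- x) + pprt (- y)) = p (pprt (x + y)) + p (pprt (- x)) + p (pprt (- y))"
      using add Pn by (simp add: add_nonneg_nonneg)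
    moreover have "p (pprt x + pprt y + pprt (- (x + y))) = p (pprt x) + p (pprt y) + p (pprt (- (x + y)))"
      using add Pn by (simp add: add_nonneg_nonneg)
    ultimately show ?thesis unfolding \<phi>0_def using e by simp
  qed
  have lin_scale: "\<phi>0 (c *\<^sub>R x) = c * \<phi>0 x" for c x
  proof (cases "0 \<le> c")
    case True
    have "pprt (c *\<^sub>R x) = c *\<^sub>R pprt x" by (rule pprt_scaleR[OF True])
    moreover have "pprt (- (c *\<^sub>R x)) = c *\<^sub>R pprt (- x)"
      using pprt_scaleR[OF True, of "-x"] by simp
    ultimately show ?thesis unfolding \<phi>0_def using hom[OF True] Pn by (simp add: algebra_simps)
  next
    case False
    define d where "d = - c"
    have d: "0 \<le> d" using False d_def by simp
    have "pprt (c *\<^sub>R x) = d *\<^sub>R pprt (- x)"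
      using pprt_scaleR[OF d, of "-x"] d_def by simp
    moreover have "pprt (- (c *\<^sub>R x)) = d *\<^sub>R pprt x"
      using pprt_scaleR[OF d, of x] d_def by simp
    ultimately show ?thesis unfolding \<phi>0_def using hom[OF d] Pn d_def by (simp add: algebra_simps)
  qed
  have bd: "\<bar>\<phi>0 x\<bar> \<le> K * norm x" for x
  proof -
    have a1: "0 \<le> p (pprt x)" "p (pprt x) \<le> K * norm x"
      using bnd[OF Pn[of x]] norm_pprt[of x] K by (auto intro: order_trans mult_left_mono)
    have a2: "0 \<le> p (pprt (- x))" "p (pprt (- x)) \<le> K * norm x"
      using bnd[OF Pn[of "-x"]] norm_pprt[of "-x"] K by (auto intro: order_trans mult_left_mono)
    show ?thesis unfolding \<phi>0_def using a1 a2 by (simp add: abs_le_iff)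
  qed
  have bl: "bounded_linear \<phi>0"
    by (rule bounded_linear_intro[of _ K]) (use lin_add lin_scale bd in \<open>auto simp: mult.commute\<close>)
  have "\<forall>x. 0 \<le> x \<longrightarrow> \<phi>0 x = p x"
  proof (intro allI impI)
    fix x :: 'a assume x: "0 \<le> x"
    have "pprt (- x) = 0" using x by (simp add: pprt_eq_0)
    then show "\<phi>0 x = p x" unfolding \<phi>0_def using x p0 by simp
  qed
  then show ?thesis using bounded_linear_Blinfun_apply[OF bl] by (intro exI[of _ "Blinfun \<phi>0"]) simp
qed

lemma riesz_decomp:
  fixes f :: "'a::banach_lattice \<Rightarrow>\<^sub>L real"
  shows "\<exists>f1 f2. dual_le 0 f1 \<and> dual_le 0 f2 \<and> (\<forall>x. blinfun_apply f x = blinfun_apply f1 x - blinfun_apply f2 x)"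
proof -
  define p where "p x = Sup {blinfun_apply f z | z. 0 \<le> z \<and> z \<le> x}" for x
  have fz: "blinfun_apply f z \<le> norm f * norm x" if "0 \<le> z" "z \<le> x" for z x
  proof -
    have "blinfun_apply f z \<le> norm f * norm z" using norm_blinfun[of f z] by simp
    also have "\<dots> \<le> norm f * norm x" using norm_mono_lat[OF that] by (simp add: mult_left_mono)
    finally show ?thesis .
  qed
  have p_ge: "blinfun_apply f z \<le> p x" if "0 \<le> z" "z \<le> x" for z x
    unfolding p_def
  proof (rule cSup_upper)
    show "blinfun_apply f z \<in> {blinfun_apply f z |z. 0 \<le> z \<and> z \<le> x}" using that by blast
    show "bdd_above {blinfun_apply f z |z. 0 \<le> z \<and> z \<le> x}"
      unfolding bdd_above_def using fz by blast
  qed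
  have p_le: "p x \<le> B" if "0 \<le> x" "\<And>z. 0 \<le> z \<Longrightarrow> z \<le> x \<Longrightarrow> blinfun_apply f z \<le> B" for x B
    unfolding p_def
  proof (rule cSup_least)
    show "{blinfun_apply f z |z. 0 \<le> z \<and> z \<le> x} \<noteq> {}" using that(1) by blast
    show "\<And>y. y \<in> {blinfun_apply f z |z. 0 \<le> z \<and> z \<le> x} \<Longrightarrow> y \<le> B" using that(2) by blast
  qed
  have padd: "p (x + y) = p x + p y" if x: "0 \<le> x" and y: "0 \<le> y" for x y
  proof (rule antisym)
    show "p (x + y) \<le> p x + p y"
    proof (rule p_le)
      show "0 \<le> x + y" using x y by simp
      fix z assume z: "0 \<le> z" "z \<le> x + y"
      have z1: "0 \<le> inf z x" "inf z x \<le> x" using z x by simp_all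
      have z2: "0 \<le> pprt (z - x)" "pprt (z - x) \<le> y"
        using z y unfolding pprt_def by (simp_all add: diff_le_eq add.commute)
      have "z = inf z x + pprt (z - x)" using sub_pprt_inf[of z x] by (simp add: algebra_simps)
      hence "blinfun_apply f z = blinfun_apply f (inf z x) + blinfun_apply f (pprt (z - x))"
        by (metis blinfun.add_right)
      also have "\<dots> \<le> p x + p y" using p_ge[OF z1] p_ge[OF z2] by simp
      finally show "blinfun_apply f z \<le> p x + p y" .
    qed
  next
    have "p x \<le> p (x + y) - p y"
    proof (rule p_le[OF x])
      fix z1 assume z1: "0 \<le> z1" "z1 \<le> x"
      have "p y \<le> p (x + y) - blinfun_apply f z1"
      proof (rule p_le[OF y])
        fix z2 assume z2: "0 \<le> z2" "z2 \<le> y"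
        have "blinfun_apply f (z1 + z2) \<le> p (x + y)" using z1 z2 by (intro p_ge) (simp_all add: add_mono)
        then show "blinfun_apply f z2 \<le> p (x + y) - blinfun_apply f z1" by (simp add: blinfun.add_right)
      qed
      then show "blinfun_apply f z1 \<le> p (x + y) - p y" by simp
    qed
    then show "p x + p y \<le> p (x + y)" by simp
  qed
  have p0: "p 0 = 0"
  proof (rule antisym)
    show "p 0 \<le> 0" by (rule p_le) (auto dest: antisym)
    show "0 \<le> p 0" using p_ge[of 0 0] by simp
  qed
  have phom: "p (c *\<^sub>R x) = c * p x" if c: "0 \<le> c" and x: "0 \<le> x" for c x
  proof (cases "c = 0")
    case True then show ?thesis using p0 by simp
  next
    case False
    hence cp: "0 < c" using c by simp
    have cx: "0 \<le> c *\<^sub>R x" using c x by (rule scaleR_nonneg_nonneg)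
    show ?thesis
    proof (rule antisym)
      show "p (c *\<^sub>R x) \<le> c * p x"
      proof (rule p_le[OF cx])
        fix z assume z: "0 \<le> z" "z \<le> c *\<^sub>R x"
        have "0 \<le> (1/c) *\<^sub>R z" using z cp by (intro scaleR_nonneg_nonneg) auto
        moreover have "(1/c) *\<^sub>R z \<le> x"
          using scaleR_left_mono[OF z(2), of "1/c"] cp by simp
        ultimately have "blinfun_apply f ((1/c) *\<^sub>R z) \<le> p x" by (rule p_ge)
        hence "(1/c) * blinfun_apply f z \<le> p x" by (simp add: blinfun.scaleR_right)
        then show "blinfun_apply f z \<le> c * p x" using cp by (simp add: field_simps)
      qed
    next
      have "p x \<le> p (c *\<^sub>R x) / c"
      proof (rule p_le[OF x])
        fix z assume z: "0 \<le> z" "z \<le> x"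
        have "blinfun_apply f (c *\<^sub>R z) \<le> p (c *\<^sub>R x)"
          using z c by (intro p_ge) (simp_all add: scaleR_left_mono scaleR_nonneg_nonneg)
        then show "blinfun_apply f z \<le> p (c *\<^sub>R x) / c" using cp by (simp add: blinfun.scaleR_right field_simps)
      qed
      then show "c * p x \<le> p (c *\<^sub>R x)" using cp by (simp add: field_simps)
    qed
  qed
  have pbnd: "0 \<le> p x \<and> p x \<le> norm f * norm x" if x: "0 \<le> x" for x
  proof
    show "0 \<le> p x" using p_ge[of 0 x] x by simp
    show "p x \<le> norm f * norm x" by (rule p_le[OF x]) (rule fz)
  qed
  obtain f1 :: "'a \<Rightarrow>\<^sub>L real" where f1: "\<forall>x. 0 \<le> x \<longrightarrow> blinfun_apply f1 x = p x"
    using ext_pos[OF padd phom pbnd norm_ge_zero] by blast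
  have pos1: "dual_le 0 f1" unfolding posf_def using f1 pbnd by simp
  have pos2: "dual_le 0 (f1 - f)" unfolding posf_def using f1 p_ge[of _ _] by (simp add: blinfun.diff_left)
  show ?thesis using pos1 pos2 by (intro exI[of _ f1] exI[of _ "f1 - f"]) (simp add: blinfun.diff_left)
qed

lemma lmod_minus: "lmod (- x) = lmod (x::'a::banach_lattice)"
  unfolding lmod_def by (simp add: sup_commute)

lemma pprt_sub_le: "pprt a - pprt b \<le> pprt (a - (b::'a::banach_lattice))"
proof -
  have "a \<le> pprt b + pprt (a - b)"
  proof -
    have "a = b + (a - b)" by simp
    also have "\<dots> \<le> pprt b + pprt (a - b)" by (intro add_mono) (simp_all add: pprt_def)
    finally show ?thesis .
  qed
  moreover have "0 \<le> pprt b + pprt (a - b)" by simp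
  ultimately have "pprt a \<le> pprt b + pprt (a - b)" unfolding pprt_def[of a] by (rule sup_least)
  then show ?thesis by (simp add: diff_le_eq add.commute)
qed

lemma pprt_lip: "norm (pprt a - pprt b) \<le> norm (a - (b::'a::banach_lattice))"
proof (rule norm_lmod_le)
  have "pprt a - pprt b \<le> lmod (a - b)" using pprt_sub_le[of a b] pprt_le_lmod[of "a - b"] by (rule order_trans)
  moreover have "- (pprt a - pprt b) \<le> lmod (a - b)"
  proof -
    have "- (pprt a - pprt b) = pprt b - pprt a" by simp
    also have "\<dots> \<le> lmod (b - a)" using pprt_sub_le[of b a] pprt_le_lmod[of "b - a"] by (rule order_trans)
    also have "lmod (b - a) = lmod (a - b)" using lmod_minus[of "a - b"] by simp
    finally show ?thesis .
  qed
  ultimately show "lmod (pprt a - pprt b) \<le> lmod (a - b)" unfolding lmod_def[of "pprt a - pprt b"] by (rule sup_least)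
qed

lemma closed_cone: "closed {x::'a::banach_lattice. 0 \<le> x}"
proof -
  have ee: "0 \<le> x \<longleftrightarrow> pprt (- x) = 0" for x :: 'a
    unfolding pprt_neg neg_equal_0_iff_equal by (rule zero_le_iff_zero_nprt)
  have e: "{x::'a. 0 \<le> x} = {x. pprt (- x) = 0}" using ee by blast
  have "continuous_on UNIV (\<lambda>x::'a. pprt (- x))"
    unfolding continuous_on_iff
  proof (intro ballI allI impI)
    fix x x' :: 'a and e :: real assume e: "0 < e" 
    show "\<exists>d>0. \<forall>x'\<in>UNIV. dist x' x < d \<longrightarrow> dist (pprt (- x')) (pprt (- x)) < e"
    proof (intro exI[of _ e] conjI ballI impI)
      fix x' :: 'a assume "dist x' x < e"
      moreover have "dist (pprt (- x')) (pprt (- x)) \<le> dist x' x"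
        unfolding dist_norm using pprt_lip[of "- x'" "- x"] by (simp add: norm_minus_commute)
      ultimately show "dist (pprt (- x')) (pprt (- x)) < e" by simp
    qed (use e in simp)
  qed
  then show ?thesis unfolding e by (rule closed_Collect_eq) (rule continuous_on_const)
qed

lemma lim_ge:
  fixes X :: "nat \<Rightarrow> 'a::banach_lattice"
  assumes "X \<longlonglongrightarrow> L" "eventually (\<lambda>n. a \<le> X n) sequentially"
  shows "a \<le> L"
proof -
  have t: "(\<lambda>n. X n - a) \<longlonglongrightarrow> L - a" using assms(1) by (intro tendsto_diff) auto
  have ev: "eventually (\<lambda>n. X n - a \<in> {x. 0 \<le> x}) sequentially"
    using assms(2) by eventually_elim simp
  have "L - a \<in> {x. 0 \<le> x}" by (rule Lim_in_closed_set[OF closed_cone ev _ t]) simp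
  then show ?thesis by simp
qed

lemma comp_func:
  fixes f :: "'a::banach_lattice \<Rightarrow>\<^sub>L real" and C :: "'a set"
  assumes fpos: "dual_le 0 f" and Cpos: "\<And>s. s \<in> C \<Longrightarrow> 0 \<le> s" and C0: "0 \<in> C"
    and Cadd: "\<And>s s'. s \<in> C \<Longrightarrow> s' \<in> C \<Longrightarrow> s + s' \<in> C"
    and Cscal: "\<And>s c. s \<in> C \<Longrightarrow> 0 < c \<Longrightarrow> c *\<^sub>R s \<in> C"
  shows "\<exists>\<phi>. dual_le 0 \<phi> \<and> (\<forall>x. 0 \<le> x \<longrightarrow> blinfun_apply \<phi> x = Sup {blinfun_apply f (inf x s) | s. s \<in> C})"
proof -
  define P where "P x = Sup {blinfun_apply f (inf x s) | s. s \<in> C}" for x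
  have fmono: "\<And>a b. a \<le> b \<Longrightarrow> blinfun_apply f a \<le> blinfun_apply f b" by (rule posf_mono[OF fpos])
  have fnn: "\<And>a. 0 \<le> a \<Longrightarrow> 0 \<le> blinfun_apply f a" using fpos unfolding posf_def by blast
  have P_ge: "blinfun_apply f (inf x s) \<le> P x" if "0 \<le> x" "s \<in> C" for x s
    unfolding P_def
  proof (rule cSup_upper)
    show "blinfun_apply f (inf x s) \<in> {blinfun_apply f (inf x s) |s. s \<in> C}" using that by blast
    show "bdd_above {blinfun_apply f (inf x s) |s. s \<in> C}"
      unfolding bdd_above_def using fmono[OF inf_le1] by blast
  qed
  have P_le: "P x \<le> B" if "\<And>s. s \<in> C \<Longrightarrow> blinfun_apply f (inf x s) \<le> B" for x B
    unfolding P_def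
  proof (rule cSup_least)
    show "{blinfun_apply f (inf x s) |s. s \<in> C} \<noteq> {}" using C0 by blast
    show "\<And>y. y \<in> {blinfun_apply f (inf x s) |s. s \<in> C} \<Longrightarrow> y \<le> B" using that by blast
  qed
  have padd: "P (x + y) = P x + P y" if x: "0 \<le> x" and y: "0 \<le> y" for x y
  proof (rule antisym)
    show "P (x + y) \<le> P x + P y"
    proof (rule P_le)
      fix s assume s: "s \<in> C"
      have "inf (x + y) s = inf s (x + y)" by (rule inf_commute)
      also have "\<dots> \<le> inf s x + inf s y" using Cpos[OF s] x y by (rule inf_add_le)
      also have "\<dots> = inf x s + inf y s" by (simp add: inf_commute)
      finally have "blinfun_apply f (inf (x + y) s) \<le> blinfun_apply f (inf x s) + blinfun_apply f (inf y s)"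
        using fmono by (simp add: blinfun.add_right[symmetric])
      also have "\<dots> \<le> P x + P y" using P_ge[OF x s] P_ge[OF y s] by simp
      finally show "blinfun_apply f (inf (x + y) s) \<le> P x + P y" .
    qed
  next
    have xy: "0 \<le> x + y" using x y by simp
    have "P x \<le> P (x + y) - P y"
    proof (rule P_le)
      fix s assume s: "s \<in> C"
      have "P y \<le> P (x + y) - blinfun_apply f (inf x s)"
      proof (rule P_le)
        fix s' assume s': "s' \<in> C"
        define t where "t = s + s'"
        have t: "t \<in> C" unfolding t_def using Cadd[OF s s'] .
        have tt: "2 *\<^sub>R t \<in> C" using Cscal[OF t] by simp
        have "inf x s \<le> inf x t" unfolding t_def using Cpos[OF s'] by (simp add: le_infI2 add_increasing2)
        moreover have "inf y s' \<le> inf y t" unfolding t_def using Cpos[OF s] by (simp add: le_infI2 add_increasing)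
        ultimately have "inf x s + inf y s' \<le> inf x t + inf y t" by (rule add_mono)
        also have "\<dots> \<le> inf (x + y) (2 *\<^sub>R t)"
        proof (rule le_infI)
          show "inf x t + inf y t \<le> x + y" by (intro add_mono) simp_all
          have "inf x t + inf y t \<le> t + t" by (intro add_mono) simp_all
          then show "inf x t + inf y t \<le> 2 *\<^sub>R t" by (simp add: scaleR_2)
        qed
        finally have "blinfun_apply f (inf x s) + blinfun_apply f (inf y s') \<le> blinfun_apply f (inf (x + y) (2 *\<^sub>R t))"
          using fmono by (simp add: blinfun.add_right[symmetric])
        also have "\<dots> \<le> P (x + y)" by (rule P_ge[OF xy tt])
        finally show "blinfun_apply f (inf y s') \<le> P (x + y) - blinfun_apply f (inf x s)" by simp
      qed
      then show "blinfun_apply f (inf x s) \<le> P (x + y) - P y" by simp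
    qed
    then show "P x + P y \<le> P (x + y)" by simp
  qed
  have P0: "P 0 = 0"
  proof (rule antisym)
    show "P 0 \<le> 0"
    proof (rule P_le)
      fix s assume "s \<in> C"
      hence "inf 0 s = 0" using Cpos by (simp add: inf_absorb1)
      then show "blinfun_apply f (inf 0 s) \<le> 0" by simp
    qed
    show "0 \<le> P 0" using P_ge[OF order_refl C0] by simp
  qed
  have phom: "P (c *\<^sub>R x) = c * P x" if c: "0 \<le> c" and x: "0 \<le> x" for c x
  proof (cases "c = 0")
    case True then show ?thesis using P0 by simp
  next
    case False
    hence cp: "0 < c" using c by simp
    have cx: "0 \<le> c *\<^sub>R x" using c x by (rule scaleR_nonneg_nonneg)
    show ?thesis
    proof (rule antisym)
      show "P (c *\<^sub>R x) \<le> c * P x"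
      proof (rule P_le)
        fix s assume s: "s \<in> C"
        have s': "(1/c) *\<^sub>R s \<in> C" using Cscal[OF s] cp by simp
        have "inf (c *\<^sub>R x) s = c *\<^sub>R inf x ((1/c) *\<^sub>R s)"
          using inf_scaleR[OF c, of x "(1/c) *\<^sub>R s"] cp by simp
        hence "blinfun_apply f (inf (c *\<^sub>R x) s) = c * blinfun_apply f (inf x ((1/c) *\<^sub>R s))"
          by (simp add: blinfun.scaleR_right)
        also have "\<dots> \<le> c * P x" using P_ge[OF x s'] c by (rule mult_left_mono)
        finally show "blinfun_apply f (inf (c *\<^sub>R x) s) \<le> c * P x" .
      qed
    next
      have "P x \<le> P (c *\<^sub>R x) / c"
      proof (rule P_le)
        fix s assume s: "s \<in> C"
        have s': "c *\<^sub>R s \<in> C" using Cscal[OF s cp] .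
        have ee: "c *\<^sub>R inf x s = inf (c *\<^sub>R x) (c *\<^sub>R s)" by (rule inf_scaleR[OF c])
        have "c * blinfun_apply f (inf x s) = blinfun_apply f (c *\<^sub>R inf x s)"
          by (simp add: blinfun.scaleR_right)
        also have "\<dots> = blinfun_apply f (inf (c *\<^sub>R x) (c *\<^sub>R s))" using ee by simp
        also have "\<dots> \<le> P (c *\<^sub>R x)" by (rule P_ge[OF cx s'])
        finally show "blinfun_apply f (inf x s) \<le> P (c *\<^sub>R x) / c" using cp by (simp add: field_simps)
      qed
      then show "c * P x \<le> P (c *\<^sub>R x)" using cp by (simp add: field_simps)
    qed
  qed
  have pbnd: "0 \<le> P x \<and> P x \<le> norm f * norm x" if x: "0 \<le> x" for x
  proof
    show "0 \<le> P x"
    proof -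
      have "inf x 0 = 0" using x by (simp add: inf_absorb2)
      then show ?thesis using P_ge[OF x C0] by simp
    qed
    show "P x \<le> norm f * norm x"
    proof (rule P_le)
      fix s assume "s \<in> C"
      have "blinfun_apply f (inf x s) \<le> blinfun_apply f x" using fmono[OF inf_le1] .
      also have "\<dots> \<le> norm f * norm x" using norm_blinfun[of f x] by simp
      finally show "blinfun_apply f (inf x s) \<le> norm f * norm x" .
    qed
  qed
  obtain \<phi> :: "'a \<Rightarrow>\<^sub>L real" where \<phi>: "\<forall>x. 0 \<le> x \<longrightarrow> blinfun_apply \<phi> x = P x"
    using ext_pos[OF padd phom pbnd norm_ge_zero] by blast
  have "dual_le 0 \<phi>" unfolding posf_def using \<phi> pbnd by simp
  then show ?thesis using \<phi> unfolding P_def by blast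
qed

lemma inf_sum_le:
  fixes x :: "'a::banach_lattice"
  assumes x: "0 \<le> x" and fin: "finite I" and a: "\<And>i. i \<in> I \<Longrightarrow> 0 \<le> a i"
  shows "inf x (\<Sum>i\<in>I. a i) \<le> (\<Sum>i\<in>I. inf x (a i))"
  using fin a
proof (induction I rule: finite_induct)
  case empty then show ?case using x by (simp add: inf_absorb2)
next
  case (insert j I)
  have aI: "0 \<le> (\<Sum>i\<in>I. a i)" using insert.prems by (intro sum_nonneg) simp
  have "inf x (\<Sum>i\<in>insert j I. a i) = inf x (a j + (\<Sum>i\<in>I. a i))" using insert.hyps by simp
  also have "\<dots> \<le> inf x (a j) + inf x (\<Sum>i\<in>I. a i)" using x insert.prems aI by (intro inf_add_le) simp_all
  also have "\<dots> \<le> inf x (a j) + (\<Sum>i\<in>I. inf x (a i))" using insert.IH insert.prems by (simp add: add_left_mono)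
  also have "\<dots> = (\<Sum>i\<in>insert j I. inf x (a i))" using insert.hyps by simp
  finally show ?case .
qed

lemma disj_sum_le:
  fixes x :: "'a::banach_lattice"
  assumes fin: "finite I" and a0: "\<And>i. 0 \<le> a i" and disj: "\<And>i j. i \<noteq> j \<Longrightarrow> inf (a i) (a j) = 0"
    and ax: "\<And>i. a i \<le> x" and x: "0 \<le> x"
  shows "(\<Sum>i\<in>I. a i) \<le> x"
  using fin
proof (induction I rule: finite_induct)
  case empty then show ?case using x by simp
next
  case (insert j I)
  have "inf (a j) (\<Sum>i\<in>I. a i) \<le> (\<Sum>i\<in>I. inf (a j) (a i))"
    using a0 insert.hyps(1) by (intro inf_sum_le) simp_all
  also have "\<dots> = 0"
  proof (rule sum.neutral, rule ballI)
    fix i assume "i \<in> I"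
    hence "j \<noteq> i" using insert.hyps(2) by blast
    then show "inf (a j) (a i) = 0" by (rule disj)
  qed
  finally have "inf (a j) (\<Sum>i\<in>I. a i) = 0"
    using a0 insert.hyps(1) by (intro antisym) (simp_all add: sum_nonneg)
  hence "a j + (\<Sum>i\<in>I. a i) = sup (a j) (\<Sum>i\<in>I. a i)" by (rule disj_add_sup)
  also have "\<dots> \<le> x" using ax insert.IH by simp
  finally show ?case using insert.hyps by simp
qed

lemma supC_ge:
  fixes f :: "'a::banach_lattice \<Rightarrow>\<^sub>L real"
  assumes fpos: "dual_le 0 f" and s: "s \<in> C"
  shows "blinfun_apply f (inf x s) \<le> Sup {blinfun_apply f (inf x s) | s. s \<in> C}"
proof (rule cSup_upper)
  show "blinfun_apply f (inf x s) \<in> {blinfun_apply f (inf x s) |s. s \<in> C}" using s by blast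
  show "bdd_above {blinfun_apply f (inf x s) |s. s \<in> C}"
    unfolding bdd_above_def using posf_mono[OF fpos inf_le1] by blast
qed

lemma supC_le:
  fixes f :: "'a::banach_lattice \<Rightarrow>\<^sub>L real"
  assumes "C \<noteq> {}" and "\<And>s. s \<in> C \<Longrightarrow> blinfun_apply f (inf x s) \<le> B"
  shows "Sup {blinfun_apply f (inf x s) | s. s \<in> C} \<le> B"
proof (rule cSup_least)
  show "{blinfun_apply f (inf x s) |s. s \<in> C} \<noteq> {}" using assms(1) by blast
  show "\<And>y. y \<in> {blinfun_apply f (inf x s) |s. s \<in> C} \<Longrightarrow> y \<le> B" using assms(2) by blast
qed

lemma disjoint_null:
  fixes f :: "'a::banach_lattice \<Rightarrow>\<^sub>L real" and z :: "nat \<Rightarrow> 'a"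
  assumes oc: "dual_norm_order_continuous TYPE('a)" and fpos: "dual_le 0 f"
    and z0: "\<And>k. 0 \<le> z k" and disj: "\<And>i j. i \<noteq> j \<Longrightarrow> inf (z i) (z j) = 0"
    and zb: "\<And>k. norm (z k) \<le> M"
  shows "(\<lambda>k. blinfun_apply f (z k)) \<longlonglongrightarrow> 0"
proof -
  have fmono: "\<And>a b. a \<le> b \<Longrightarrow> blinfun_apply f a \<le> blinfun_apply f b" by (rule posf_mono[OF fpos])
  have fnn: "\<And>a. 0 \<le> a \<Longrightarrow> 0 \<le> blinfun_apply f a" using fpos unfolding posf_def by blast
  define C where "C m = {s. 0 \<le> s \<and> (\<exists>N c. 0 \<le> c \<and> s \<le> c *\<^sub>R (\<Sum>i\<in>{m..<N}. z i))}" for m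
  have sum0: "0 \<le> (\<Sum>i\<in>A. z i)" for A by (rule sum_nonneg) (rule z0)
  have summono: "(\<Sum>i\<in>A. z i) \<le> (\<Sum>i\<in>B. z i)" if "A \<subseteq> B" "finite B" for A B
    by (rule sum_mono2[OF that(2) that(1)]) (rule z0)
  have Cpos: "\<And>s. s \<in> C m \<Longrightarrow> 0 \<le> s" for m unfolding C_def by blast
  have C0: "0 \<in> C m" for m unfolding C_def by (auto intro!: exI[of _ m] exI[of _ 0])
  have Cadd: "s + s' \<in> C m" if s1: "s \<in> C m" and s2: "s' \<in> C m" for s s' m
  proof -
    obtain N c where Nc: "0 \<le> s" "0 \<le> c" "s \<le> c *\<^sub>R (\<Sum>i\<in>{m..<N}. z i)" using s1 unfolding C_def by blast
    obtain N' c' where Nc': "0 \<le> s'" "0 \<le> c'" "s' \<le> c' *\<^sub>R (\<Sum>i\<in>{m..<N'}. z i)" using s2 unfolding C_def by blast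
    define N'' where "N'' = max N N'"
    have A: "c *\<^sub>R (\<Sum>i\<in>{m..<N}. z i) \<le> c *\<^sub>R (\<Sum>i\<in>{m..<N''}. z i)"
      using Nc(2) unfolding N''_def by (intro scaleR_left_mono summono) auto
    have B: "c' *\<^sub>R (\<Sum>i\<in>{m..<N'}. z i) \<le> c' *\<^sub>R (\<Sum>i\<in>{m..<N''}. z i)"
      using Nc'(2) unfolding N''_def by (intro scaleR_left_mono summono) auto
    have "s + s' \<le> c *\<^sub>R (\<Sum>i\<in>{m..<N''}. z i) + c' *\<^sub>R (\<Sum>i\<in>{m..<N''}. z i)"
      by (rule add_mono[OF order_trans[OF Nc(3) A] order_trans[OF Nc'(3) B]])
    hence "s + s' \<le> (c + c') *\<^sub>R (\<Sum>i\<in>{m..<N''}. z i)" by (simp only: scaleR_add_left)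
    then show ?thesis unfolding C_def using Nc(1,2) Nc'(1,2) by (auto intro!: exI[of _ N''] exI[of _ "c + c'"])
  qed
  have Cscal: "t *\<^sub>R s \<in> C m" if s1: "s \<in> C m" and t0: "0 < t" for s t m
  proof -
    obtain N c where Nc: "0 \<le> s" "0 \<le> c" "s \<le> c *\<^sub>R (\<Sum>i\<in>{m..<N}. z i)" using s1 unfolding C_def by blast
    have "t *\<^sub>R s \<le> (t * c) *\<^sub>R (\<Sum>i\<in>{m..<N}. z i)" using scaleR_left_mono[OF Nc(3), of t] t0 by simp
    moreover have "0 \<le> t *\<^sub>R s" using t0 Nc(1) by (intro scaleR_nonneg_nonneg) auto
    ultimately show ?thesis unfolding C_def using Nc(2) t0 by (auto intro!: exI[of _ N] exI[of _ "t * c"])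
  qed
  have Cmono: "C m' \<subseteq> C m" if "m \<le> m'" for m m'
  proof
    fix s assume "s \<in> C m'"
    then obtain N c where Nc: "0 \<le> s" "0 \<le> c" "s \<le> c *\<^sub>R (\<Sum>i\<in>{m'..<N}. z i)" unfolding C_def by blast
    have "c *\<^sub>R (\<Sum>i\<in>{m'..<N}. z i) \<le> c *\<^sub>R (\<Sum>i\<in>{m..<N}. z i)"
      using Nc(2) that by (intro scaleR_left_mono summono) auto
    then show "s \<in> C m" unfolding C_def using Nc by (auto intro!: exI[of _ N] exI[of _ c] intro: order_trans)
  qed
  define P where "P m x = Sup {blinfun_apply f (inf x s) | s. s \<in> C m}" for m x
  define \<phi> where "\<phi> m = (SOME \<phi>. dual_le 0 \<phi> \<and> (\<forall>x. 0 \<le> x \<longrightarrow> blinfun_apply \<phi> x = P m x))" for m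
  have \<phi>: "dual_le 0 (\<phi> m) \<and> (\<forall>x. 0 \<le> x \<longrightarrow> blinfun_apply (\<phi> m) x = P m x)" for m
    unfolding \<phi>_def P_def
    by (rule someI_ex) (rule comp_func[OF fpos Cpos C0 Cadd Cscal])
  have Cne: "C m \<noteq> {}" for m using C0 by blast
  have Pmono: "P m' x \<le> P m x" if "m \<le> m'" for m m' x
    unfolding P_def by (rule supC_le[OF Cne]) (use supC_ge[OF fpos] Cmono[OF that] in blast)
  define D where "D = range \<phi>"
  have Dne: "D \<noteq> {}" unfolding D_def by simp
  have Ddir: "\<forall>f\<in>D. \<forall>g\<in>D. \<exists>h\<in>D. dual_le h f \<and> dual_le h g"
  proof (intro ballI)
    fix f1 g1 assume "f1 \<in> D" "g1 \<in> D"
    then obtain m m' where mm: "f1 = \<phi> m" "g1 = \<phi> m'" unfolding D_def by blast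
    have "dual_le (\<phi> (max m m')) (\<phi> m)" unfolding dual_le_def using \<phi> Pmono[of m "max m m'"] by simp
    moreover have "dual_le (\<phi> (max m m')) (\<phi> m')" unfolding dual_le_def using \<phi> Pmono[of m' "max m m'"] by simp
    ultimately show "\<exists>h\<in>D. dual_le h f1 \<and> dual_le h g1" unfolding D_def mm by blast
  qed
  have Dpos: "\<forall>f\<in>D. dual_le 0 f" unfolding D_def using \<phi> by blast
  have bound: "(\<Sum>i<N. blinfun_apply f (inf x (c *\<^sub>R z i))) \<le> blinfun_apply f x" if x: "0 \<le> x" and c: "0 \<le> c" for x N c
  proof -
    have "(\<Sum>i<N. inf x (c *\<^sub>R z i)) \<le> x"
    proof (rule disj_sum_le)
      show "0 \<le> inf x (c *\<^sub>R z i)" for i using x c z0[of i] by (simp add: scaleR_nonneg_nonneg)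
      show "inf (inf x (c *\<^sub>R z i)) (inf x (c *\<^sub>R z j)) = 0" if "i \<noteq> j" for i j
      proof (rule antisym)
        have "inf (inf x (c *\<^sub>R z i)) (inf x (c *\<^sub>R z j)) \<le> inf (c *\<^sub>R z i) (c *\<^sub>R z j)"
          by (simp add: le_infI1 le_infI2 inf.coboundedI2)
        also have "\<dots> = c *\<^sub>R inf (z i) (z j)" by (rule inf_scaleR[OF c, symmetric])
        also have "\<dots> = 0" using disj[OF that] by simp
        finally show "inf (inf x (c *\<^sub>R z i)) (inf x (c *\<^sub>R z j)) \<le> 0" .
        show "0 \<le> inf (inf x (c *\<^sub>R z i)) (inf x (c *\<^sub>R z j))" using x c z0 by (simp add: scaleR_nonneg_nonneg)
      qed
      show "inf x (c *\<^sub>R z i) \<le> x" for i by simp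
    qed (use x in simp_all)
    hence "blinfun_apply f (\<Sum>i<N. inf x (c *\<^sub>R z i)) \<le> blinfun_apply f x" by (rule fmono)
    then show ?thesis by (simp add: blinfun.sum_right)
  qed
  have tail: "\<exists>m. P m x \<le> e" if x: "0 \<le> x" and e: "0 < e" for x e
  proof (rule ccontr)
    assume nt: "\<not> ?thesis"
    have big: "e < P m x" for m using nt by (simp add: not_le)
    have block: "\<exists>N c. 0 \<le> c \<and> e < (\<Sum>i\<in>{m..<N}. blinfun_apply f (inf x (c *\<^sub>R z i)))" for m
    proof -
      have "\<exists>s\<in>C m. e < blinfun_apply f (inf x s)"
      proof (rule ccontr)
        assume "\<not> ?thesis"
        hence "P m x \<le> e" unfolding P_def by (intro supC_le[OF Cne]) (simp add: not_less)
        then show False using big[of m] by simp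
      qed
      then obtain s where s: "s \<in> C m" "e < blinfun_apply f (inf x s)" by blast
      then obtain N c where Nc: "0 \<le> c" "s \<le> c *\<^sub>R (\<Sum>i\<in>{m..<N}. z i)" unfolding C_def by blast
      have "blinfun_apply f (inf x s) \<le> blinfun_apply f (inf x (\<Sum>i\<in>{m..<N}. c *\<^sub>R z i))"
        using Nc(2) by (intro fmono inf_mono) (simp_all add: scaleR_sum_right)
      also have "\<dots> \<le> blinfun_apply f (\<Sum>i\<in>{m..<N}. inf x (c *\<^sub>R z i))"
        using x Nc(1) z0 by (intro fmono inf_sum_le) (simp_all add: scaleR_nonneg_nonneg)
      also have "\<dots> = (\<Sum>i\<in>{m..<N}. blinfun_apply f (inf x (c *\<^sub>R z i)))" by (simp add: blinfun.sum_right)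
      finally show ?thesis using s(2) Nc(1) by (intro exI[of _ N] exI[of _ c]) simp
    qed
    have cmono: "blinfun_apply f (inf x (c *\<^sub>R z i)) \<le> blinfun_apply f (inf x (c' *\<^sub>R z i))" if "c \<le> c'" for c c' i
      using that z0[of i] by (intro fmono inf_mono) (simp_all add: scaleR_right_mono)
    have grow: "\<exists>N c. 0 \<le> c \<and> real K * e \<le> (\<Sum>i<N. blinfun_apply f (inf x (c *\<^sub>R z i)))" for K
    proof (induction K)
      case 0
      show ?case by (intro exI[of _ 0] exI[of _ 0]) simp
    next
      case (Suc K)
      then obtain N c where Nc: "0 \<le> c" "real K * e \<le> (\<Sum>i<N. blinfun_apply f (inf x (c *\<^sub>R z i)))" by blast
      obtain N' c' where Nc': "0 \<le> c'" "e < (\<Sum>i\<in>{N..<N'}. blinfun_apply f (inf x (c' *\<^sub>R z i)))"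
        using block[of N] by blast
      have NN: "N \<le> N'" using Nc'(2) e by (cases "N \<le> N'") auto
      define c'' where "c'' = max c c'"
      have "(\<Sum>i<N'. blinfun_apply f (inf x (c'' *\<^sub>R z i)))
          = (\<Sum>i<N. blinfun_apply f (inf x (c'' *\<^sub>R z i))) + (\<Sum>i\<in>{N..<N'}. blinfun_apply f (inf x (c'' *\<^sub>R z i)))"
      proof -
        have ee: "{..<N'} = {..<N} \<union> {N..<N'}" using NN by auto
        have "(\<Sum>i\<in>{..<N} \<union> {N..<N'}. blinfun_apply f (inf x (c'' *\<^sub>R z i)))
          = (\<Sum>i<N. blinfun_apply f (inf x (c'' *\<^sub>R z i))) + (\<Sum>i\<in>{N..<N'}. blinfun_apply f (inf x (c'' *\<^sub>R z i)))"
          by (rule sum.union_disjoint) auto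
        then show ?thesis unfolding ee .
      qed
      moreover have "(\<Sum>i<N. blinfun_apply f (inf x (c *\<^sub>R z i))) \<le> (\<Sum>i<N. blinfun_apply f (inf x (c'' *\<^sub>R z i)))"
        by (intro sum_mono cmono) (simp add: c''_def)
      moreover have "(\<Sum>i\<in>{N..<N'}. blinfun_apply f (inf x (c' *\<^sub>R z i))) \<le> (\<Sum>i\<in>{N..<N'}. blinfun_apply f (inf x (c'' *\<^sub>R z i)))"
        by (intro sum_mono cmono) (simp add: c''_def)
      ultimately have "real (Suc K) * e \<le> (\<Sum>i<N'. blinfun_apply f (inf x (c'' *\<^sub>R z i)))"
        using Nc(2) Nc'(2) by (simp add: distrib_right)
      moreover have "0 \<le> c''" using Nc(1) c''_def by simp
      ultimately show ?case by blast
    qed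
    define K where "K = nat \<lceil>blinfun_apply f x / e\<rceil> + 1"
    have "blinfun_apply f x / e < real K" unfolding K_def by linarith
    hence Kb: "blinfun_apply f x < real K * e" using e by (simp add: field_simps)
    obtain N c where Nc: "0 \<le> c" "real K * e \<le> (\<Sum>i<N. blinfun_apply f (inf x (c *\<^sub>R z i)))" using grow by blast
    have "(\<Sum>i<N. blinfun_apply f (inf x (c *\<^sub>R z i))) \<le> blinfun_apply f x" by (rule bound[OF x Nc(1)])
    then show False using Nc(2) Kb by linarith
  qed
  have Dinf: "\<forall>g. (\<forall>f\<in>D. dual_le g f) \<longrightarrow> dual_le g 0"
  proof (intro allI impI)
    fix g assume g: "\<forall>f\<in>D. dual_le g f"
    show "dual_le g 0" unfolding dual_le_def
    proof (intro allI impI)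
      fix x :: 'a assume x: "0 \<le> x"
      have "blinfun_apply g x \<le> 0 + e" if e: "0 < e" for e
      proof -
        obtain m where m: "P m x \<le> e" using tail[OF x e] by blast
        have "blinfun_apply g x \<le> blinfun_apply (\<phi> m) x" using g x unfolding D_def dual_le_def by blast
        also have "\<dots> = P m x" using \<phi> x by blast
        finally show ?thesis using m by simp
      qed
      then show "blinfun_apply g x \<le> blinfun_apply 0 x" by (simp add: field_le_epsilon)
    qed
  qed
  have small: "\<forall>e>0. \<exists>f\<in>D. norm f < e"
    using oc Dne Ddir Dpos Dinf unfolding dual_norm_order_continuous_def by blast
  have M0: "0 \<le> M" using zb[of 0] norm_ge_zero[of "z 0"] by linarith
  show ?thesis
  proof (rule LIMSEQ_I)
    fix r :: real assume r: "0 < r"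
    define e where "e = r / (M + 1)"
    have e: "0 < e" unfolding e_def using r M0 by simp
    obtain m where m: "norm (\<phi> m) < e" using small e unfolding D_def by blast
    have "norm (blinfun_apply f (z k) - 0) < r" if k: "m \<le> k" for k
    proof -
      have zC: "z k \<in> C m"
      proof -
        have fin: "finite {m..<Suc k}" by simp
        have kin: "k \<in> {m..<Suc k}" using k by simp
        have "(\<Sum>i\<in>{m..<Suc k}. z i) = z k + (\<Sum>i\<in>{m..<Suc k} - {k}. z i)" by (rule sum.remove[OF fin kin])
        moreover have "0 \<le> (\<Sum>i\<in>{m..<Suc k} - {k}. z i)" by (rule sum0)
        ultimately have zz: "z k \<le> 1 *\<^sub>R (\<Sum>i\<in>{m..<Suc k}. z i)" by simp
        show ?thesis unfolding C_def
          by (intro CollectI conjI exI[of _ "Suc k"] exI[of _ "1::real"]) (use z0[of k] zz in simp_all)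
      qed
      have "blinfun_apply f (z k) = blinfun_apply f (inf (z k) (z k))" by simp
      also have "\<dots> \<le> P m (z k)" unfolding P_def by (rule supC_ge[OF fpos zC])
      also have "\<dots> = blinfun_apply (\<phi> m) (z k)" using \<phi> z0 by simp
      also have "\<dots> \<le> norm (\<phi> m) * norm (z k)" using norm_blinfun[of "\<phi> m" "z k"] by simp
      also have "\<dots> \<le> e * M" using m zb[of k] e by (intro mult_mono) auto
      also have "\<dots> < r"
      proof -
        have "e * M = r * (M / (M + 1))" unfolding e_def by simp
        also have "\<dots> < r" using r M0 by (simp add: field_simps)
        finally show ?thesis .
      qed
      finally have "blinfun_apply f (z k) < r" .
      moreover have "0 \<le> blinfun_apply f (z k)" using fnn z0 by blast
      ultimately show ?thesis by simp
    qed
    then show "\<exists>no. \<forall>n\<ge>no. norm (blinfun_apply f (z n) - 0) < r" by blast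
  qed
qed

lemma pow_ineq:
  assumes "n < m"
  shows "1 \<le> (4::real) ^ m * ((1/2) ^ n * (1/2) ^ Suc m)"
proof -
  have "(2::real) ^ Suc n \<le> 2 ^ m" using assms by (intro power_increasing) auto
  hence "(2::real) ^ n * 2 ^ Suc m \<le> 2 ^ m * 2 ^ m" by (simp add: mult.commute)
  also have "\<dots> = 4 ^ m" by (simp add: power_mult_distrib[symmetric])
  finally have "(2::real) ^ n * 2 ^ Suc m \<le> 4 ^ m" .
  then show ?thesis by (simp add: power_one_over field_simps)
qed

lemma core_null:
  fixes f :: "'a::banach_lattice \<Rightarrow>\<^sub>L real" and y :: "nat \<Rightarrow> 'a"
  assumes oc: "dual_norm_order_continuous TYPE('a)" and fpos: "dual_le 0 f"
    and y0: "\<And>n. 0 \<le> y n" and yb: "\<And>n. norm (y n) \<le> M"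
    and uaw: "\<And>w. 0 \<le> w \<Longrightarrow> (\<lambda>n. blinfun_apply f (inf (y n) w)) \<longlonglongrightarrow> 0"
  shows "(\<lambda>n. blinfun_apply f (y n)) \<longlonglongrightarrow> 0"
proof (rule ccontr)
  assume nc: "\<not> ?thesis"
  have fmono: "\<And>a b. a \<le> b \<Longrightarrow> blinfun_apply f a \<le> blinfun_apply f b" by (rule posf_mono[OF fpos])
  have fnn: "\<And>a. 0 \<le> a \<Longrightarrow> 0 \<le> blinfun_apply f a" using fpos unfolding posf_def by blast
  obtain \<delta> where \<delta>: "\<delta> > 0" and fr0: "\<forall>N. \<exists>n\<ge>N. \<delta> \<le> \<bar>blinfun_apply f (y n)\<bar>"
    using nc unfolding LIMSEQ_def dist_real_def by (auto simp: not_less)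
  have fr: "\<exists>n\<ge>N. \<delta> \<le> blinfun_apply f (y n)" for N
    using fr0 fnn[OF y0] by (metis abs_of_nonneg)
  have nxt: "\<exists>n'. n < n' \<and> \<delta> \<le> blinfun_apply f (y n') \<and> blinfun_apply f (inf (y n') ((4^k) *\<^sub>R S)) < \<delta>/4"
    if S: "0 \<le> S" for n S k
  proof -
    have "0 \<le> (4::real)^k *\<^sub>R S" using S by (intro scaleR_nonneg_nonneg) auto
    from LIMSEQ_D[OF uaw[OF this], of "\<delta>/4"] \<delta> obtain N1 where
      N1: "\<forall>n'\<ge>N1. norm (blinfun_apply f (inf (y n') ((4^k) *\<^sub>R S)) - 0) < \<delta>/4" by auto
    obtain n' where n': "max N1 (Suc n) \<le> n'" "\<delta> \<le> blinfun_apply f (y n')" using fr by blast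
    have "blinfun_apply f (inf (y n') ((4^k) *\<^sub>R S)) < \<delta>/4" using N1 n'(1) by force
    then show ?thesis using n' by (intro exI[of _ n']) auto
  qed
  define sel where "sel k n S = (SOME n'. n < n' \<and> \<delta> \<le> blinfun_apply f (y n') \<and> blinfun_apply f (inf (y n') ((4^k) *\<^sub>R S)) < \<delta>/4)"
    for k n S
  have sel: "n < sel k n S \<and> \<delta> \<le> blinfun_apply f (y (sel k n S)) \<and> blinfun_apply f (inf (y (sel k n S)) ((4^k) *\<^sub>R S)) < \<delta>/4"
    if "0 \<le> S" for k n S
    unfolding sel_def by (rule someI_ex) (rule nxt[OF that])
  obtain n0 where n0: "\<delta> \<le> blinfun_apply f (y n0)" using fr by blast
  define st where "st = rec_nat (n0, y n0) (\<lambda>k p. (sel k (fst p) (snd p), snd p + y (sel k (fst p) (snd p))))"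
  have st0: "st 0 = (n0, y n0)" unfolding st_def by simp
  have stS: "st (Suc k) = (sel k (fst (st k)) (snd (st k)), snd (st k) + y (sel k (fst (st k)) (snd (st k))))" for k
    unfolding st_def by simp
  define \<sigma> where "\<sigma> k = fst (st k)" for k
  define S where "S k = snd (st k)" for k
  define x where "x k = y (\<sigma> k)" for k
  have \<sigma>S: "\<sigma> (Suc k) = sel k (\<sigma> k) (S k)" for k unfolding \<sigma>_def S_def using stS by simp
  have SS: "S (Suc k) = S k + x (Suc k)" for k unfolding S_def x_def using stS \<sigma>S unfolding \<sigma>_def S_def by simp
  have Ssum: "S k = (\<Sum>i\<le>k. x i)" for k
  proof (induction k)
    case 0 then show ?case unfolding S_def x_def \<sigma>_def using st0 by simp
  next
    case (Suc k) then show ?case using SS by simp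
  qed
  have x0: "0 \<le> x k" for k unfolding x_def by (rule y0)
  have xb: "norm (x k) \<le> M" for k unfolding x_def by (rule yb)
  have S0: "0 \<le> S k" for k unfolding Ssum by (rule sum_nonneg) (rule x0)
  have selk: "\<sigma> k < \<sigma> (Suc k) \<and> \<delta> \<le> blinfun_apply f (x (Suc k)) \<and> blinfun_apply f (inf (x (Suc k)) ((4^k) *\<^sub>R S k)) < \<delta>/4" for k
    unfolding \<sigma>S x_def using sel[OF S0[of k], where k=k and n="\<sigma> k"] by simp
  have M0: "0 \<le> M" using yb[of 0] norm_ge_zero[of "y 0"] by linarith
  define a where "a k = ((1/2::real)^k) *\<^sub>R x k" for k
  have a0: "0 \<le> a k" for k unfolding a_def using x0 by (intro scaleR_nonneg_nonneg) auto
  have sa: "summable a"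
  proof (rule summable_comparison_test)
    show "\<exists>N. \<forall>n\<ge>N. norm (a n) \<le> M * (1/2)^n" unfolding a_def using xb by (auto simp: mult.commute intro: mult_left_mono)
    show "summable (\<lambda>n. M * (1/2::real)^n)" by (intro summable_mult summable_geometric) simp
  qed
  define xs where "xs = suminf a"
  have ge: "a j \<le> xs" for j
  proof -
    have lim: "(\<lambda>N. \<Sum>k<N. a k) \<longlonglongrightarrow> xs" unfolding xs_def by (rule summable_LIMSEQ[OF sa])
    have "eventually (\<lambda>N. a j \<le> (\<Sum>k<N. a k)) sequentially"
    proof (rule eventually_sequentiallyI[of "Suc j"])
      fix N assume N: "Suc j \<le> N"
      have fin: "finite {..<N}" by simp
      have jin: "j \<in> {..<N}" using N by simp
      have "(\<Sum>k<N. a k) = a j + (\<Sum>k\<in>{..<N} - {j}. a k)" by (rule sum.remove[OF fin jin])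
      moreover have "0 \<le> (\<Sum>k\<in>{..<N} - {j}. a k)" by (rule sum_nonneg) (rule a0)
      ultimately show "a j \<le> (\<Sum>k<N. a k)" by simp
    qed
    then show ?thesis by (rule lim_ge[OF lim])
  qed
  have xs0: "0 \<le> xs" using a0[of 0] ge[of 0] by (rule order_trans)
  define z where "z k = pprt (x (Suc k) - (4^k) *\<^sub>R S k - ((1/2::real)^k) *\<^sub>R xs)" for k
  have z0: "0 \<le> z k" for k unfolding z_def by simp
  have Bnn: "0 \<le> (4::real)^k *\<^sub>R S k + ((1/2::real)^k) *\<^sub>R xs" for k
    using S0[of k] xs0 by (intro add_nonneg_nonneg scaleR_nonneg_nonneg) auto
  have zle: "z k \<le> x (Suc k)" for k
  proof -
    have "x (Suc k) - (4^k) *\<^sub>R S k - ((1/2::real)^k) *\<^sub>R xs = x (Suc k) - ((4::real)^k *\<^sub>R S k + ((1/2::real)^k) *\<^sub>R xs)"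
      by (simp add: algebra_simps)
    also have "\<dots> \<le> x (Suc k)" unfolding diff_le_eq by (rule add_increasing2[OF Bnn order_refl])
    finally show ?thesis unfolding z_def pprt_def using x0 by simp
  qed
  have zb: "norm (z k) \<le> M" for k using norm_mono_lat[OF z0 zle] xb[of "Suc k"] by (rule order_trans)
  have disj_lt: "inf (z n) (z m) = 0" if nm: "n < m" for n m
  proof -
    have Sm: "x (Suc n) \<le> S m"
    proof -
      have fin: "finite {..m}" by simp
      have jin: "Suc n \<in> {..m}" using nm by simp
      have "S m = x (Suc n) + (\<Sum>k\<in>{..m} - {Suc n}. x k)" unfolding Ssum by (rule sum.remove[OF fin jin])
      moreover have "0 \<le> (\<Sum>k\<in>{..m} - {Suc n}. x k)" by (rule sum_nonneg) (rule x0)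
      ultimately show ?thesis by simp
    qed
    have zm: "z m \<le> pprt (x (Suc m) - (4::real)^m *\<^sub>R x (Suc n))"
      unfolding z_def
    proof (rule pprt_mono)
      have "(4::real)^m *\<^sub>R x (Suc n) \<le> (4::real)^m *\<^sub>R S m" using Sm by (intro scaleR_left_mono) auto
      moreover have "0 \<le> ((1/2::real)^m) *\<^sub>R xs" using xs0 by (intro scaleR_nonneg_nonneg) auto
      ultimately have "(4::real)^m *\<^sub>R x (Suc n) \<le> (4::real)^m *\<^sub>R S m + ((1/2::real)^m) *\<^sub>R xs"
        by (simp add: add_increasing2)
      then show "x (Suc m) - 4 ^ m *\<^sub>R S m - (1 / 2) ^ m *\<^sub>R xs \<le> x (Suc m) - 4 ^ m *\<^sub>R x (Suc n)"
        by (simp add: algebra_simps)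
    qed
    define \<beta> where "\<beta> = (1/2::real)^n * (1/2)^Suc m"
    have zn: "z n \<le> pprt (x (Suc n) - \<beta> *\<^sub>R x (Suc m))"
      unfolding z_def
    proof (rule pprt_mono)
      have "a (Suc m) \<le> xs" by (rule ge)
      hence "((1/2::real)^n) *\<^sub>R a (Suc m) \<le> ((1/2::real)^n) *\<^sub>R xs" by (intro scaleR_left_mono) auto
      hence "\<beta> *\<^sub>R x (Suc m) \<le> ((1/2::real)^n) *\<^sub>R xs" unfolding a_def \<beta>_def by simp
      moreover have "0 \<le> (4::real)^n *\<^sub>R S n" using S0 by (intro scaleR_nonneg_nonneg) auto
      ultimately have "\<beta> *\<^sub>R x (Suc m) \<le> (4::real)^n *\<^sub>R S n + ((1/2::real)^n) *\<^sub>R xs"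
        by (simp add: add_increasing)
      then show "x (Suc n) - 4 ^ n *\<^sub>R S n - (1 / 2) ^ n *\<^sub>R xs \<le> x (Suc n) - \<beta> *\<^sub>R x (Suc m)"
        by (simp add: algebra_simps)
    qed
    have "inf (z m) (z n) \<le> inf (pprt (x (Suc m) - (4::real)^m *\<^sub>R x (Suc n))) (pprt (x (Suc n) - \<beta> *\<^sub>R x (Suc m)))"
      using zm zn by (rule inf_mono)
    also have "\<dots> = 0"
      by (rule disj_key[OF x0]) (use pow_ineq[OF nm] in \<open>simp_all add: \<beta>_def\<close>)
    finally have "inf (z m) (z n) \<le> 0" .
    moreover have "0 \<le> inf (z m) (z n)" using z0 by simp
    ultimately show ?thesis by (simp add: inf_commute)
  qed
  have disj: "inf (z i) (z j) = 0" if "i \<noteq> j" for i j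
  proof (cases "i < j")
    case True then show ?thesis by (rule disj_lt)
  next
    case False
    hence "j < i" using that by simp
    then show ?thesis using disj_lt[of j i] by (simp add: inf_commute)
  qed
  have zlim: "(\<lambda>k. blinfun_apply f (z k)) \<longlonglongrightarrow> 0" by (rule disjoint_null[OF oc fpos z0 disj zb])
  have lower: "3 * \<delta> / 4 \<le> blinfun_apply f (z k) + (1/2::real)^k * blinfun_apply f xs" for k
  proof -
    define A where "A = x (Suc k)"
    define B where "B = (4::real)^k *\<^sub>R S k"
    define c where "c = ((1/2::real)^k) *\<^sub>R xs"
    have c0: "0 \<le> c" unfolding c_def using xs0 by (intro scaleR_nonneg_nonneg) auto
    have zk: "z k = pprt (A - (B + c))" unfolding z_def A_def B_def c_def by (simp add: algebra_simps)
    have "A - z k = inf A (B + c)" unfolding zk by (rule sub_pprt_inf)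
    also have "\<dots> \<le> inf A B + c" by (rule inf_add_const_le[OF c0])
    finally have "A \<le> z k + inf A B + c" by (simp add: algebra_simps)
    hence "blinfun_apply f A \<le> blinfun_apply f (z k + inf A B + c)" by (rule fmono)
    also have "\<dots> = blinfun_apply f (z k) + blinfun_apply f (inf A B) + (1/2::real)^k * blinfun_apply f xs"
      unfolding c_def by (simp add: blinfun.add_right blinfun.scaleR_right)
    finally have "blinfun_apply f A \<le> blinfun_apply f (z k) + blinfun_apply f (inf A B) + (1/2::real)^k * blinfun_apply f xs" .
    moreover have "\<delta> \<le> blinfun_apply f A" "blinfun_apply f (inf A B) < \<delta>/4" using selk[of k] unfolding A_def B_def by auto
    ultimately show ?thesis by linarith
  qed
  have "(\<lambda>k. blinfun_apply f (z k) + (1/2::real)^k * blinfun_apply f xs) \<longlonglongrightarrow> 0 + 0 * blinfun_apply f xs"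
    by (intro tendsto_add zlim tendsto_mult LIMSEQ_power_zero tendsto_const) simp
  hence "3 * \<delta> / 4 \<le> 0" by (intro LIMSEQ_le_const) (use lower in auto)
  then show False using \<delta> by simp
qed

lemma uaw_weakly_null:
  fixes x :: "nat \<Rightarrow> 'a::banach_lattice"
  assumes oc: "dual_norm_order_continuous TYPE('a)" and bd: "bounded (range x)" and u: "uaw_null x"
  shows "weakly_null x"
  unfolding weakly_null_def
proof
  fix f :: "'a \<Rightarrow>\<^sub>L real"
  obtain M where M: "\<forall>y\<in>range x. norm y \<le> M" using bd unfolding bounded_iff by blast
  have pos_null: "(\<lambda>n. blinfun_apply g (lmod (x n))) \<longlonglongrightarrow> 0" if g: "dual_le 0 g" for g
  proof (rule core_null[OF oc g])
    show "0 \<le> lmod (x n)" for n by (rule lmod_nonneg)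
    show "norm (lmod (x n)) \<le> M" for n using M norm_lmod[of "x n"] by simp
    fix w :: 'a assume w: "0 \<le> w"
    have "weakly_null (\<lambda>n. inf (lmod (x n)) w)" using u w unfolding uaw_null_def by blast
    then show "(\<lambda>n. blinfun_apply g (inf (lmod (x n)) w)) \<longlonglongrightarrow> 0" unfolding weakly_null_def by blast
  qed
  obtain f1 f2 where f12: "dual_le 0 f1" "dual_le 0 f2" "\<forall>x. blinfun_apply f x = blinfun_apply f1 x - blinfun_apply f2 x"
    using riesz_decomp[of f] by blast
  have l0: "(\<lambda>n. blinfun_apply f1 (lmod (x n)) + blinfun_apply f2 (lmod (x n))) \<longlonglongrightarrow> 0 + 0"
    by (intro tendsto_add pos_null f12)
  have lim: "(\<lambda>n. blinfun_apply f1 (lmod (x n)) + blinfun_apply f2 (lmod (x n))) \<longlonglongrightarrow> 0"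
    using l0 by simp
  have bnd: "norm (blinfun_apply f (x n)) \<le> blinfun_apply f1 (lmod (x n)) + blinfun_apply f2 (lmod (x n))" for n
  proof -
    have "\<bar>blinfun_apply f1 (x n)\<bar> \<le> blinfun_apply f1 (lmod (x n))" by (rule posf_abs[OF f12(1)])
    moreover have "\<bar>blinfun_apply f2 (x n)\<bar> \<le> blinfun_apply f2 (lmod (x n))" by (rule posf_abs[OF f12(2)])
    ultimately show ?thesis using f12(3) by simp
  qed
  have ev: "eventually (\<lambda>n. norm (blinfun_apply f (x n)) \<le> blinfun_apply f1 (lmod (x n)) + blinfun_apply f2 (lmod (x n))) sequentially"
    by (rule always_eventually) (use bnd in blast)
  show "(\<lambda>n. blinfun_apply f (x n)) \<longlonglongrightarrow> 0" by (rule Lim_null_comparison[OF ev lim])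
qed

theorem corollary4p2:
  fixes T :: "'a::banach_lattice \<Rightarrow>\<^sub>L 'b::banach_lattice"
  assumes "dual_norm_order_continuous TYPE('a)"
    and "reflexive_space TYPE('b)"
    and "weak_Dunford_Pettis T"
  shows "uaw_Dunford_Pettis T"
  unfolding uaw_Dunford_Pettis_def
proof (intro allI impI)
  fix x :: "nat \<Rightarrow> 'a" assume x: "bounded (range x) \<and> uaw_null x"
  have "weakly_null x" using uaw_weakly_null[OF assms(1)] x by blast
  then show "(\<lambda>n. norm (blinfun_apply T (x n))) \<longlonglongrightarrow> 0" by (rule wdp_cc[OF assms(2) assms(3)])
qed

end
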